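(* Let $k\geq 3$ be an odd integer and let $G$ be a connected graph of even order $n\geq 4$. (i) If $n\geq 10$ and $\lambda_1(D(G))\le \lambda_1(D(K_1\vee(K_{n-2}\cup K_1)))$, then $G$ is $\mathrm{GBC}_k$ unless $G\cong K_1\vee(K_{n-2}\cup K_1)$. (ii) If $4\le n\le 8$ and $\lambda_1(D(G))\le \lambda_1(D(S_{n,\frac{n}{2}}))$, then $G$ is $\mathrm{GBC}_k$ unless $G\cong S_{n,\frac{n}{2}}$.
   Context: All graphs are finite, simple, undirected. For a connected graph $G$, $D(G)$ is its distance matrix (entry $(i,j)$ is the distance between $v_i$ and $v_j$) and $\lambda_1(D(G))$ its largest eigenvalue. $G\cup H$ is disjoint union, $G\vee H$ the join, $tK_1$ the edgeless graph on $t$ vertices, $S_{n,k}=K_k\vee(n-k)K_1$. For a graph $H$, $i(H)$ is the number of isolated vertices of $H$ and $\mathrm{odd}(H)$ the number of components of $H$ with an odd number ($\ge 3$) of vertices. The $k$-Berge–Tutte formula is $\mathrm{def}_k(G)=\max_{S\subseteq V(G)} \big(k\, i(G-S)-k|S|\big)$ if $k$ is even, and $\max_{S\subseteq V(G)}\big(\mathrm{odd}(G-S)+k\, i(G-S)-k|S|\big)$ if $k$ is odd; a set $S$ attaining the maximum is a $k$-barrier. A connected graph of even order is $\mathrm{GBC}_k$ (generalized bicritical about integer $k$-matching) if it has no non-empty $k$-barrier. *)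

theory Defs
  imports Complex_Main
begin

definition simple_graph :: "'a set \<Rightarrow> ('a \<Rightarrow> 'a \<Rightarrow> bool) \<Rightarrow> bool" where
  "simple_graph V E \<longleftrightarrow> finite V \<and> (\<forall>u v. E u v \<longrightarrow> u \<in> V \<and> v \<in> V)
     \<and> (\<forall>u v. E u v \<longrightarrow> E v u) \<and> (\<forall>v. \<not> E v v)"

definition connected_graph :: "'a set \<Rightarrow> ('a \<Rightarrow> 'a \<Rightarrow> bool) \<Rightarrow> bool" where
  "connected_graph V E \<longleftrightarrow> V \<noteq> {} \<and> (\<forall>u\<in>V. \<forall>v\<in>V. E\<^sup>*\<^sup>* u v)"

definition gdist :: "('a \<Rightarrow> 'a \<Rightarrow> bool) \<Rightarrow> 'a \<Rightarrow> 'a \<Rightarrow> nat" where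
  "gdist E u v = (LEAST d. (E ^^ d) u v)"

definition dist_eigenvalue :: "'a set \<Rightarrow> ('a \<Rightarrow> 'a \<Rightarrow> bool) \<Rightarrow> real \<Rightarrow> bool" where
  "dist_eigenvalue V E \<mu> \<longleftrightarrow> (\<exists>x :: 'a \<Rightarrow> real. (\<exists>v\<in>V. x v \<noteq> 0) \<and>
      (\<forall>u\<in>V. (\<Sum>w\<in>V. real (gdist E u w) * x w) = \<mu> * x u))"

definition lambda1_dist :: "'a set \<Rightarrow> ('a \<Rightarrow> 'a \<Rightarrow> bool) \<Rightarrow> real" where
  "lambda1_dist V E = Max {\<mu>. dist_eigenvalue V E \<mu>}"

definition graph_iso :: "'a set \<Rightarrow> ('a \<Rightarrow> 'a \<Rightarrow> bool) \<Rightarrow> 'b set \<Rightarrow> ('b \<Rightarrow> 'b \<Rightarrow> bool) \<Rightarrow> bool" where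
  "graph_iso V E V' E' \<longleftrightarrow> (\<exists>f. bij_betw f V V' \<and> (\<forall>u\<in>V. \<forall>v\<in>V. E u v \<longleftrightarrow> E' (f u) (f v)))"

text \<open>Subgraph G - S induced on V - S.\<close>
definition del_edges :: "('a \<Rightarrow> 'a \<Rightarrow> bool) \<Rightarrow> 'a set \<Rightarrow> 'a \<Rightarrow> 'a \<Rightarrow> bool" where
  "del_edges E S u v \<longleftrightarrow> E u v \<and> u \<notin> S \<and> v \<notin> S"

definition components :: "'a set \<Rightarrow> ('a \<Rightarrow> 'a \<Rightarrow> bool) \<Rightarrow> 'a set set" where
  "components V E = (\<lambda>v. {w \<in> V. E\<^sup>*\<^sup>* v w}) ` V"

definition isolated_count :: "'a set \<Rightarrow> ('a \<Rightarrow> 'a \<Rightarrow> bool) \<Rightarrow> nat" where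
  "isolated_count V E = card {v \<in> V. \<forall>w\<in>V. \<not> E v w}"

definition odd_count :: "'a set \<Rightarrow> ('a \<Rightarrow> 'a \<Rightarrow> bool) \<Rightarrow> nat" where
  "odd_count V E = card {C \<in> components V E. odd (card C) \<and> card C \<ge> 3}"

text \<open>The quantity maximised in the k-Berge--Tutte formula, for a given S.\<close>
definition bt_value :: "nat \<Rightarrow> 'a set \<Rightarrow> ('a \<Rightarrow> 'a \<Rightarrow> bool) \<Rightarrow> 'a set \<Rightarrow> int" where
  "bt_value k V E S =
     (let i = int (isolated_count (V - S) (del_edges E S));
          od = int (odd_count (V - S) (del_edges E S))
      in if even k then int k * i - int k * int (card S)
         else od + int k * i - int k * int (card S))"

definition def_k :: "nat \<Rightarrow> 'a set \<Rightarrow> ('a \<Rightarrow> 'a \<Rightarrow> bool) \<Rightarrow> int" where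
  "def_k k V E = Max {bt_value k V E S | S. S \<subseteq> V}"

definition k_barrier :: "nat \<Rightarrow> 'a set \<Rightarrow> ('a \<Rightarrow> 'a \<Rightarrow> bool) \<Rightarrow> 'a set \<Rightarrow> bool" where
  "k_barrier k V E S \<longleftrightarrow> S \<subseteq> V \<and> bt_value k V E S = def_k k V E"

definition GBC :: "nat \<Rightarrow> 'a set \<Rightarrow> ('a \<Rightarrow> 'a \<Rightarrow> bool) \<Rightarrow> bool" where
  "GBC k V E \<longleftrightarrow> connected_graph V E \<and> even (card V) \<and>
     (\<forall>S. S \<noteq> {} \<longrightarrow> \<not> k_barrier k V E S)"

text \<open>K_1 \<or> (K_{n-2} \<union> K_1) on {0..<n}: 0 is the K_1 hub, n-1 the pendant vertex.\<close>
definition K1_join_Kn2_K1 :: "nat \<Rightarrow> nat \<Rightarrow> nat \<Rightarrow> bool" where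
  "K1_join_Kn2_K1 n u v \<longleftrightarrow> u < n \<and> v < n \<and> u \<noteq> v \<and>
     (u = 0 \<or> v = 0 \<or> (u < n - 1 \<and> v < n - 1))"

text \<open>S_{n,k} = K_k \<or> (n-k)K_1 on {0..<n}: the clique is {0..<k}.\<close>
definition S_graph :: "nat \<Rightarrow> nat \<Rightarrow> nat \<Rightarrow> nat \<Rightarrow> bool" where
  "S_graph n k u v \<longleftrightarrow> u < n \<and> v < n \<and> u \<noteq> v \<and> (u < k \<or> v < k)"

end

theory Submission
  imports Defs
begin

definition eigp :: "('a \<Rightarrow> 'a \<Rightarrow> real) \<Rightarrow> 'a set \<Rightarrow> real \<Rightarrow> bool" where
  "eigp M V \<mu> \<longleftrightarrow> (\<exists>x. (\<exists>v\<in>V. x v \<noteq> 0) \<and> (\<forall>u\<in>V. (\<Sum>w\<in>V. M u w * x w) = \<mu> * x u))"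

lemma collatz:
  fixes M :: "'a \<Rightarrow> 'a \<Rightarrow> real"
  assumes fin: "finite V" and nn: "\<And>u w. u \<in> V \<Longrightarrow> w \<in> V \<Longrightarrow> M u w \<ge> 0"
    and ypos: "\<And>u. u \<in> V \<Longrightarrow> y u > 0"
    and ey: "\<And>u. u \<in> V \<Longrightarrow> (\<Sum>w\<in>V. M u w * y w) = \<theta> * y u"
    and eig: "eigp M V \<mu>"
  shows "\<mu> \<le> \<theta>"
proof -
  obtain x where xv: "\<exists>v\<in>V. x v \<noteq> 0" and ex: "\<And>u. u \<in> V \<Longrightarrow> (\<Sum>w\<in>V. M u w * x w) = \<mu> * x u"
    using eig unfolding eigp_def by blast
  define r where "r u = \<bar>x u\<bar> / y u" for u
  have ne: "V \<noteq> {}" using xv by blast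
  define t where "t = Max (r ` V)"
  have "t \<in> r ` V" unfolding t_def using fin ne by (intro Max_in) auto
  then obtain i where iV: "i \<in> V" and ti: "t = r i" by blast
  have rle: "r u \<le> t" if "u \<in> V" for u unfolding t_def using fin that by (intro Max_ge) auto
  obtain v where vV: "v \<in> V" and xv0: "x v \<noteq> 0" using xv by blast
  have "r v > 0" unfolding r_def using ypos[OF vV] xv0 by auto
  hence tpos: "t > 0" using rle[OF vV] by linarith
  have xi: "\<bar>x i\<bar> = t * y i" using ti ypos[OF iV] unfolding r_def by auto
  have xw: "\<bar>x w\<bar> \<le> t * y w" if "w \<in> V" for w
    using rle[OF that] ypos[OF that] unfolding r_def by (simp add: divide_le_eq)
  have "\<bar>\<mu>\<bar> * (t * y i) = \<bar>\<Sum>w\<in>V. M i w * x w\<bar>" using ex[OF iV] xi by (simp add: abs_mult)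
  also have "\<dots> \<le> (\<Sum>w\<in>V. \<bar>M i w * x w\<bar>)" by (rule sum_abs)
  also have "\<dots> \<le> (\<Sum>w\<in>V. M i w * (t * y w))"
    by (intro sum_mono) (simp add: abs_mult nn iV xw mult_left_mono)
  also have "\<dots> = t * (\<Sum>w\<in>V. M i w * y w)" by (simp add: sum_distrib_left algebra_simps)
  also have "\<dots> = t * (\<theta> * y i)" using ey[OF iV] by simp
  finally have "\<bar>\<mu>\<bar> * (t * y i) \<le> \<theta> * (t * y i)" by (simp add: algebra_simps)
  hence "\<bar>\<mu>\<bar> \<le> \<theta>" using tpos ypos[OF iV] by (simp add: mult_le_cancel_right)
  thus ?thesis by simp
qed

lemma eig_orth:
  fixes M :: "'a \<Rightarrow> 'a \<Rightarrow> real"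
  assumes fin: "finite V" and sym: "\<And>u w. u \<in> V \<Longrightarrow> w \<in> V \<Longrightarrow> M u w = M w u"
    and ex: "\<And>u. u \<in> V \<Longrightarrow> (\<Sum>w\<in>V. M u w * x w) = \<mu> * x u"
    and ey: "\<And>u. u \<in> V \<Longrightarrow> (\<Sum>w\<in>V. M u w * y w) = \<nu> * y u"
    and ne: "\<mu> \<noteq> \<nu>"
  shows "(\<Sum>u\<in>V. x u * y u) = 0"
proof -
  have "\<mu> * (\<Sum>u\<in>V. x u * y u) = (\<Sum>u\<in>V. \<mu> * x u * y u)"
    by (subst sum_distrib_left) (simp add: mult.assoc)
  also have "\<dots> = (\<Sum>u\<in>V. (\<Sum>w\<in>V. M u w * x w) * y u)"
    by (intro sum.cong) (auto simp: ex)
  also have "\<dots> = (\<Sum>u\<in>V. \<Sum>w\<in>V. M u w * x w * y u)" by (simp add: sum_distrib_right)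
  also have "\<dots> = (\<Sum>w\<in>V. \<Sum>u\<in>V. M u w * x w * y u)" by (rule sum.swap)
  also have "\<dots> = (\<Sum>w\<in>V. x w * (\<Sum>u\<in>V. M w u * y u))"
    by (intro sum.cong refl) (simp add: sum_distrib_left sym algebra_simps)
  also have "\<dots> = (\<Sum>w\<in>V. \<nu> * (x w * y w))" by (intro sum.cong) (auto simp: ey)
  also have "\<dots> = \<nu> * (\<Sum>u\<in>V. x u * y u)" by (subst sum_distrib_left) simp
  finally show ?thesis using ne by (metis mult_right_cancel)
qed

lemma bessel:
  fixes e :: "'i \<Rightarrow> 'a \<Rightarrow> real"
  assumes fin: "finite V" and finF: "finite F"
    and on: "\<And>i j. i \<in> F \<Longrightarrow> j \<in> F \<Longrightarrow> (\<Sum>u\<in>V. e i u * e j u) = (if i = j then 1 else 0)"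
    and vV: "v \<in> V"
  shows "(\<Sum>i\<in>F. (e i v)^2) \<le> 1"
proof -
  define c where "c i = e i v" for i
  define d where "d u = (if u = v then 1 else (0::real))" for u
  define p where "p u = (\<Sum>i\<in>F. c i * e i u)" for u
  have "0 \<le> (\<Sum>u\<in>V. (d u - p u)^2)" by (intro sum_nonneg) simp
  also have "\<dots> = (\<Sum>u\<in>V. d u * d u) - 2 * (\<Sum>u\<in>V. d u * p u) + (\<Sum>u\<in>V. p u * p u)"
    by (simp add: power2_eq_square algebra_simps sum.distrib sum_subtractf sum_distrib_left)
  also have "(\<Sum>u\<in>V. d u * d u) = 1"
  proof -
    have "(\<Sum>u\<in>V. d u * d u) = (\<Sum>u\<in>V. if v = u then 1 else 0)" by (intro sum.cong) (auto simp: d_def)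
    then show ?thesis using fin vV by simp
  qed
  also have "(\<Sum>u\<in>V. d u * p u) = p v"
  proof -
    have "(\<Sum>u\<in>V. d u * p u) = (\<Sum>u\<in>V. if v = u then p u else 0)" by (intro sum.cong) (auto simp: d_def)
    then show ?thesis using fin vV by simp
  qed
  also have "p v = (\<Sum>i\<in>F. (e i v)^2)" by (simp add: p_def c_def power2_eq_square)
  also have "(\<Sum>u\<in>V. p u * p u) = (\<Sum>i\<in>F. \<Sum>j\<in>F. c i * c j * (\<Sum>u\<in>V. e i u * e j u))"
  proof -
    have "(\<Sum>u\<in>V. p u * p u) = (\<Sum>u\<in>V. \<Sum>i\<in>F. \<Sum>j\<in>F. c i * c j * (e i u * e j u))"
      by (simp add: p_def sum_product algebra_simps)
    also have "\<dots> = (\<Sum>i\<in>F. \<Sum>u\<in>V. \<Sum>j\<in>F. c i * c j * (e i u * e j u))" by (rule sum.swap)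
    also have "\<dots> = (\<Sum>i\<in>F. \<Sum>j\<in>F. \<Sum>u\<in>V. c i * c j * (e i u * e j u))"
      by (intro sum.cong refl) (rule sum.swap)
    also have "\<dots> = (\<Sum>i\<in>F. \<Sum>j\<in>F. c i * c j * (\<Sum>u\<in>V. e i u * e j u))"
      by (simp add: sum_distrib_left)
    finally show ?thesis .
  qed
  also have "\<dots> = (\<Sum>i\<in>F. \<Sum>j\<in>F. if i = j then c i * c j else 0)"
    by (intro sum.cong refl) (simp add: on)
  also have "\<dots> = (\<Sum>i\<in>F. (e i v)^2)" using finF by (simp add: c_def power2_eq_square)
  finally show ?thesis by simp
qed

lemma card_orthonormal:
  fixes e :: "'i \<Rightarrow> 'a \<Rightarrow> real"
  assumes fin: "finite V" and finF: "finite F"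
    and on: "\<And>i j. i \<in> F \<Longrightarrow> j \<in> F \<Longrightarrow> (\<Sum>u\<in>V. e i u * e j u) = (if i = j then 1 else 0)"
  shows "card F \<le> card V"
proof -
  have "real (card F) = (\<Sum>i\<in>F. \<Sum>u\<in>V. e i u * e i u)" by (simp add: on)
  also have "\<dots> = (\<Sum>u\<in>V. \<Sum>i\<in>F. (e i u)^2)" by (subst sum.swap) (simp add: power2_eq_square)
  also have "\<dots> \<le> (\<Sum>u\<in>V. 1)" by (intro sum_mono bessel[OF fin finF on]) auto
  also have "\<dots> = real (card V)" by simp
  finally show ?thesis by simp
qed

lemma eig_finite:
  fixes M :: "'a \<Rightarrow> 'a \<Rightarrow> real"
  assumes fin: "finite V" and sym: "\<And>u w. u \<in> V \<Longrightarrow> w \<in> V \<Longrightarrow> M u w = M w u"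
  shows "finite {\<mu>. eigp M V \<mu>}"
proof (rule ccontr)
  assume inf: "infinite {\<mu>. eigp M V \<mu>}"
  then obtain F where FS: "F \<subseteq> {\<mu>. eigp M V \<mu>}" and finF: "finite F" and cF: "card F = Suc (card V)"
    using infinite_arbitrarily_large by blast
  define x where "x \<mu> = (SOME x. (\<exists>v\<in>V. x v \<noteq> 0) \<and> (\<forall>u\<in>V. (\<Sum>w\<in>V. M u w * x w) = \<mu> * x u))" for \<mu>
  have xp: "(\<exists>v\<in>V. x \<mu> v \<noteq> 0) \<and> (\<forall>u\<in>V. (\<Sum>w\<in>V. M u w * x \<mu> w) = \<mu> * x \<mu> u)" if "\<mu> \<in> F" for \<mu>
  proof -
    have "eigp M V \<mu>" using FS that by auto
    then show ?thesis unfolding x_def eigp_def by (rule someI_ex)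
  qed
  define nr where "nr \<mu> = (\<Sum>u\<in>V. (x \<mu> u)^2)" for \<mu>
  have nrpos: "nr \<mu> > 0" if muF: "\<mu> \<in> F" for \<mu>
  proof -
    obtain v where "v \<in> V" "x \<mu> v \<noteq> 0" using xp[OF muF] by blast
    then have "0 < (x \<mu> v)^2" by simp
    also have "(x \<mu> v)^2 \<le> nr \<mu>" unfolding nr_def using fin \<open>v \<in> V\<close>
      by (intro member_le_sum) auto
    finally show ?thesis .
  qed
  define e where "e \<mu> u = x \<mu> u / sqrt (nr \<mu>)" for \<mu> u
  have on: "(\<Sum>u\<in>V. e i u * e j u) = (if i = j then 1 else 0)" if "i \<in> F" "j \<in> F" for i j
  proof (cases "i = j")
    case True
    have "(\<Sum>u\<in>V. e i u * e j u) = (\<Sum>u\<in>V. (x i u)^2) / nr i"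
      using True nrpos[OF that(1)] by (simp add: e_def sum_divide_distrib power2_eq_square)
    then show ?thesis using True nrpos[OF that(1)] by (simp add: nr_def)
  next
    case False
    have "(\<Sum>u\<in>V. x i u * x j u) = 0"
      by (rule eig_orth[where M=M and x="x i" and y="x j" and \<mu>=i and \<nu>=j])
         (use fin sym xp[OF that(1)] xp[OF that(2)] False in auto)
    then have "(\<Sum>u\<in>V. e i u * e j u) = 0"
      by (simp add: e_def sum_divide_distrib[symmetric])
    then show ?thesis using False by simp
  qed
  have "card F \<le> card V" by (rule card_orthonormal[OF fin finF on])
  then show False using cF by simp
qed

lemma bw_finite:
  fixes X :: "nat \<Rightarrow> 'a \<Rightarrow> real"
  assumes "finite V" and "\<And>m u. u \<in> V \<Longrightarrow> \<bar>X m u\<bar> \<le> B"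
  shows "\<exists>r. strict_mono r \<and> (\<forall>u\<in>V. convergent (\<lambda>m. X (r m) u))"
  using assms
proof (induction V rule: finite_induct)
  case empty
  then show ?case by (intro exI[of _ id]) (auto simp: strict_mono_def)
next
  case (insert v V)
  then obtain r where r: "strict_mono r" "\<forall>u\<in>V. convergent (\<lambda>m. X (r m) u)" by auto
  obtain r2 where r2: "strict_mono r2" "monoseq (\<lambda>n. X (r (r2 n)) v)"
    using seq_monosub[of "\<lambda>n. X (r n) v"] by (auto simp: o_def)
  have "Bseq (\<lambda>n. X (r (r2 n)) v)"
    using insert.prems by (intro BseqI'[of _ B]) auto
  then have cv: "convergent (\<lambda>n. X (r (r2 n)) v)" using r2(2) by (rule Bseq_monoseq_convergent)
  have "convergent (\<lambda>m. X (r (r2 m)) u)" if "u \<in> V" for u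
    using convergent_subseq_convergent[OF r(2)[rule_format, OF that] r2(1)] by (simp add: o_def)
  then show ?case using cv r(1) r2(1)
    by (intro exI[of _ "r \<circ> r2"]) (auto simp: strict_mono_def)
qed

definition Mv :: "('a \<Rightarrow> 'a \<Rightarrow> real) \<Rightarrow> 'a set \<Rightarrow> ('a \<Rightarrow> real) \<Rightarrow> 'a \<Rightarrow> real" where
  "Mv M V x u = (\<Sum>w\<in>V. M u w * x w)"
definition qf :: "('a \<Rightarrow> 'a \<Rightarrow> real) \<Rightarrow> 'a set \<Rightarrow> ('a \<Rightarrow> real) \<Rightarrow> real" where
  "qf M V x = (\<Sum>u\<in>V. x u * Mv M V x u)"
definition nsq :: "'a set \<Rightarrow> ('a \<Rightarrow> real) \<Rightarrow> real" where
  "nsq V x = (\<Sum>u\<in>V. (x u)^2)"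

lemma nsq_nonneg: "nsq V x \<ge> 0" unfolding nsq_def by (intro sum_nonneg) auto

lemma nsq_zero: "finite V \<Longrightarrow> nsq V x = 0 \<Longrightarrow> u \<in> V \<Longrightarrow> x u = 0"
  unfolding nsq_def by (subst (asm) sum_nonneg_eq_0_iff) auto

lemma qf_alt: "qf M V x = (\<Sum>u\<in>V. \<Sum>w\<in>V. M u w * x u * x w)"
  unfolding qf_def Mv_def by (simp add: sum_distrib_left algebra_simps)

lemma qf_scale: "qf M V (\<lambda>u. c * x u) = c^2 * qf M V x"
  unfolding qf_alt by (simp add: sum_distrib_left power2_eq_square algebra_simps)

lemma nsq_scale: "nsq V (\<lambda>u. c * x u) = c^2 * nsq V x"
  unfolding nsq_def by (simp add: sum_distrib_left power_mult_distrib)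

lemma Mv_sym:
  assumes sym: "\<And>u w. u \<in> V \<Longrightarrow> w \<in> V \<Longrightarrow> M u w = M w u"
  shows "(\<Sum>u\<in>V. a u * Mv M V b u) = (\<Sum>u\<in>V. b u * Mv M V a u)"
proof -
  have "(\<Sum>u\<in>V. a u * Mv M V b u) = (\<Sum>u\<in>V. \<Sum>w\<in>V. M u w * a u * b w)"
    unfolding Mv_def by (simp add: sum_distrib_left algebra_simps)
  also have "\<dots> = (\<Sum>w\<in>V. \<Sum>u\<in>V. M u w * a u * b w)" by (rule sum.swap)
  also have "\<dots> = (\<Sum>w\<in>V. \<Sum>u\<in>V. M w u * a u * b w)" by (intro sum.cong refl) (simp add: sym)
  also have "\<dots> = (\<Sum>u\<in>V. b u * Mv M V a u)"
    unfolding Mv_def by (simp add: sum_distrib_left algebra_simps)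
  finally show ?thesis .
qed

lemma qf_add:
  assumes sym: "\<And>u w. u \<in> V \<Longrightarrow> w \<in> V \<Longrightarrow> M u w = M w u"
  shows "qf M V (\<lambda>u. a u + t * b u) = qf M V a + 2 * t * (\<Sum>u\<in>V. b u * Mv M V a u) + t^2 * qf M V b"
proof -
  have mv: "Mv M V (\<lambda>u. a u + t * b u) u = Mv M V a u + t * Mv M V b u" for u
    unfolding Mv_def by (simp add: algebra_simps sum.distrib sum_distrib_left)
  have "qf M V (\<lambda>u. a u + t * b u) = qf M V a + t * (\<Sum>u\<in>V. a u * Mv M V b u) + t * (\<Sum>u\<in>V. b u * Mv M V a u) + t^2 * qf M V b"
    unfolding qf_def mv by (simp add: algebra_simps sum.distrib sum_distrib_left power2_eq_square)
  then show ?thesis using Mv_sym[OF sym, where a=a and b=b] by simp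
qed

lemma nsq_add: "nsq V (\<lambda>u. a u + t * b u) = nsq V a + 2 * t * (\<Sum>u\<in>V. a u * b u) + t^2 * nsq V b"
  unfolding nsq_def by (simp add: algebra_simps sum.distrib sum_distrib_left power2_eq_square)

lemma rayleigh_max:
  fixes M :: "'a \<Rightarrow> 'a \<Rightarrow> real"
  assumes fin: "finite V" and ne: "V \<noteq> {}"
  shows "\<exists>z. nsq V z = 1 \<and> (\<forall>x. nsq V x = 1 \<longrightarrow> qf M V x \<le> qf M V z)"
proof -
  define Sph where "Sph = {x. nsq V x = 1}"
  obtain v0 where v0: "v0 \<in> V" using ne by blast
  have "nsq V (\<lambda>u. if u = v0 then 1 else 0) = 1"
  proof -
    have "nsq V (\<lambda>u. if u = v0 then 1 else 0) = (\<Sum>u\<in>V. if v0 = u then 1 else 0)"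
      unfolding nsq_def by (intro sum.cong) auto
    then show ?thesis using fin v0 by simp
  qed
  then have Sne: "Sph \<noteq> {}" unfolding Sph_def by blast
  have xb: "\<bar>x u\<bar> \<le> 1" if "x \<in> Sph" "u \<in> V" for x u
  proof -
    have "(x u)^2 \<le> nsq V x" unfolding nsq_def using fin that(2) by (intro member_le_sum) auto
    then have "(x u)^2 \<le> 1" using that(1) by (simp add: Sph_def)
    then show ?thesis by (simp add: abs_square_le_1)
  qed
  define K where "K = (\<Sum>u\<in>V. \<Sum>w\<in>V. \<bar>M u w\<bar>)"
  have qb: "qf M V x \<le> K" if "x \<in> Sph" for x
  proof -
    have "qf M V x \<le> (\<Sum>u\<in>V. \<Sum>w\<in>V. \<bar>M u w * x u * x w\<bar>)"
      unfolding qf_alt by (intro sum_mono) (auto intro: order_trans[OF _ sum_abs])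
    also have "\<dots> \<le> K" unfolding K_def
    proof (intro sum_mono)
      fix u w assume "u \<in> V" "w \<in> V"
      then have "\<bar>x u\<bar> * \<bar>x w\<bar> \<le> 1 * 1" using xb[OF that] by (intro mult_mono) auto
      then have "\<bar>M u w\<bar> * (\<bar>x u\<bar> * \<bar>x w\<bar>) \<le> \<bar>M u w\<bar> * 1" by (intro mult_left_mono) auto
      then show "\<bar>M u w * x u * x w\<bar> \<le> \<bar>M u w\<bar>" by (simp add: abs_mult mult.assoc)
    qed
    finally show ?thesis .
  qed
  have bdd: "bdd_above (qf M V ` Sph)" using qb unfolding bdd_above_def by (intro exI[of _ K]) auto
  define \<sigma> where "\<sigma> = Sup (qf M V ` Sph)"
  have up: "qf M V x \<le> \<sigma>" if "x \<in> Sph" for x unfolding \<sigma>_def using bdd that by (intro cSup_upper) auto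
  have "\<exists>x\<in>Sph. \<sigma> - 1 / (real m + 1) < qf M V x" for m :: nat
  proof -
    have "\<sigma> - 1 / (real m + 1) < \<sigma>" by simp
    then show ?thesis unfolding \<sigma>_def using Sne bdd by (subst (asm) less_cSup_iff) auto
  qed
  then obtain X where X: "\<And>m. X m \<in> Sph" "\<And>m. \<sigma> - 1 / (real m + 1) < qf M V (X m)" by metis
  obtain r where r: "strict_mono r" "\<forall>u\<in>V. convergent (\<lambda>m. X (r m) u)"
    using bw_finite[OF fin, of X 1] xb X(1) by blast
  define z where "z u = (if u \<in> V then lim (\<lambda>m. X (r m) u) else 0)" for u
  have tz: "(\<lambda>m. X (r m) u) \<longlonglongrightarrow> z u" if "u \<in> V" for u
    using r(2) that by (simp add: z_def convergent_LIMSEQ_iff)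
  have tq: "(\<lambda>m. qf M V (X (r m))) \<longlonglongrightarrow> qf M V z"
    unfolding qf_alt by (intro tendsto_sum tendsto_mult tendsto_const tz)
  have tn: "(\<lambda>m. nsq V (X (r m))) \<longlonglongrightarrow> nsq V z"
    unfolding nsq_def by (intro tendsto_sum tendsto_power tz)
  have "(\<lambda>m. nsq V (X (r m))) = (\<lambda>m. 1)" using X(1) by (simp add: Sph_def)
  then have nz: "nsq V z = 1" using tn LIMSEQ_unique[OF tendsto_const] by metis
  have lb: "\<sigma> - 1 / (real m0 + 1) \<le> qf M V z" for m0
  proof (rule LIMSEQ_le_const[OF tq], intro exI[of _ m0] allI impI)
    fix n assume "m0 \<le> n"
    then have "m0 \<le> r n" using seq_suble[OF r(1), of n] by simp
    then have "1 / (real (r n) + 1) \<le> 1 / (real m0 + 1)" by (intro divide_left_mono) auto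
    then show "\<sigma> - 1 / (real m0 + 1) \<le> qf M V (X (r n))" using X(2)[of "r n"] by linarith
  qed
  have "\<sigma> \<le> qf M V z"
  proof (rule ccontr)
    assume "\<not> \<sigma> \<le> qf M V z"
    then have "0 < \<sigma> - qf M V z" by simp
    then obtain m0 where "inverse (real (Suc m0)) < \<sigma> - qf M V z" using reals_Archimedean by blast
    then show False using lb[of m0] by (simp add: inverse_eq_divide add.commute)
  qed
  then show ?thesis using nz up unfolding Sph_def by (intro exI[of _ z]) force
qed

lemma rayleigh_eig:
  fixes M :: "'a \<Rightarrow> 'a \<Rightarrow> real"
  assumes fin: "finite V" and sym: "\<And>u w. u \<in> V \<Longrightarrow> w \<in> V \<Longrightarrow> M u w = M w u"
    and ypos: "nsq V y > 0"
  shows "\<exists>\<mu>. eigp M V \<mu> \<and> qf M V y \<le> \<mu> * nsq V y"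
proof -
  have ne: "V \<noteq> {}" using ypos by (auto simp: nsq_def)
  obtain z where nz: "nsq V z = 1" and zmax: "\<And>x. nsq V x = 1 \<Longrightarrow> qf M V x \<le> qf M V z"
    using rayleigh_max[OF fin ne, of M] by blast
  define \<sigma> where "\<sigma> = qf M V z"
  have gen: "qf M V x \<le> \<sigma> * nsq V x" for x
  proof (cases "nsq V x = 0")
    case True
    then have "\<forall>u\<in>V. x u = 0" using nsq_zero[OF fin] by blast
    then have "qf M V x = 0" unfolding qf_def by simp
    then show ?thesis using True by simp
  next
    case False
    then have np: "nsq V x > 0" using nsq_nonneg[of V x] by linarith
    define c where "c = 1 / sqrt (nsq V x)"
    have c2: "c^2 = 1 / nsq V x" using np by (simp add: c_def power_divide)
    have "nsq V (\<lambda>u. c * x u) = 1" using np by (simp add: nsq_scale c2)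
    then have "qf M V (\<lambda>u. c * x u) \<le> \<sigma>" using zmax \<sigma>_def by blast
    then have "qf M V x / nsq V x \<le> \<sigma>" by (simp add: qf_scale c2)
    then show ?thesis using np by (simp add: divide_le_eq)
  qed
  define d where "d u = Mv M V z u - \<sigma> * z u" for u
  define Kd where "Kd = qf M V d - \<sigma> * nsq V d"
  have key: "2 * nsq V d + t * Kd \<le> 0" if tpos: "t > 0" for t
  proof -
    have h: "qf M V (\<lambda>u. z u + t * d u) \<le> \<sigma> * nsq V (\<lambda>u. z u + t * d u)" by (rule gen)
    have "(\<Sum>u\<in>V. d u * Mv M V z u) - \<sigma> * (\<Sum>u\<in>V. z u * d u) = nsq V d"
      unfolding nsq_def d_def by (simp add: power2_eq_square algebra_simps sum_subtractf sum_distrib_left sum.distrib)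
    moreover have "qf M V (\<lambda>u. z u + t * d u) = qf M V z + 2 * t * (\<Sum>u\<in>V. d u * Mv M V z u) + t^2 * qf M V d"
      by (rule qf_add[where M=M]) (rule sym)
    ultimately have "t * (2 * nsq V d + t * Kd) \<le> 0"
      using h nz unfolding nsq_add Kd_def \<sigma>_def
      by (simp add: algebra_simps power2_eq_square)
    then show ?thesis using tpos by (simp add: mult_le_0_iff)
  qed
  have "nsq V d = 0"
  proof (rule ccontr)
    assume "nsq V d \<noteq> 0"
    then have Dp: "nsq V d > 0" using nsq_nonneg[of V d] by linarith
    define t where "t = nsq V d / (\<bar>Kd\<bar> + 1)"
    have tp: "t > 0" using Dp by (simp add: t_def)
    have "t * \<bar>Kd\<bar> \<le> nsq V d"
      using Dp by (simp add: t_def divide_le_eq field_simps)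
    moreover have "- (t * \<bar>Kd\<bar>) \<le> t * Kd" using tp mult_left_mono[of "- \<bar>Kd\<bar>" Kd t] by simp
    ultimately have "0 < 2 * nsq V d + t * Kd" using Dp by linarith
    then show False using key[OF tp] by linarith
  qed
  then have "\<forall>u\<in>V. d u = 0" using nsq_zero[OF fin] by blast
  then have ev: "\<forall>u\<in>V. (\<Sum>w\<in>V. M u w * z w) = \<sigma> * z u" by (simp add: d_def Mv_def)
  have "\<exists>v\<in>V. z v \<noteq> 0"
  proof (rule ccontr)
    assume "\<not> (\<exists>v\<in>V. z v \<noteq> 0)"
    then have "nsq V z = 0" by (simp add: nsq_def)
    then show False using nz by simp
  qed
  then have "eigp M V \<sigma>" using ev unfolding eigp_def by blast
  then show ?thesis using gen[of y] by blast
qed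

definition DM :: "('a \<Rightarrow> 'a \<Rightarrow> bool) \<Rightarrow> 'a \<Rightarrow> 'a \<Rightarrow> real" where
  "DM E u w = real (gdist E u w)"

lemma relpowp_sym:
  assumes "\<And>a b. E a b \<Longrightarrow> E b a"
  shows "(E ^^ n) x y \<Longrightarrow> (E ^^ n) y x"
proof (induction n arbitrary: x y)
  case 0
  then show ?case by auto
next
  case (Suc n)
  from Suc.prems obtain z where "(E ^^ n) x z" "E z y" by (rule relpowp_Suc_E)
  then show ?case using Suc.IH assms by (intro relpowp_Suc_I2[of E y z]) auto
qed

lemma gdist_sym:
  assumes "\<And>a b. E a b \<Longrightarrow> E b a"
  shows "gdist E u w = gdist E w u"
proof -
  have "(E ^^ d) u w = (E ^^ d) w u" for d using relpowp_sym[where E=E, OF assms, where n=d and x=u and y=w] relpowp_sym[where E=E, OF assms, where n=d and x=w and y=u] by blast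
  then show ?thesis unfolding gdist_def by simp
qed

lemma gdist_refl: "gdist E u u = 0"
  unfolding gdist_def by (rule Least_eq_0) simp

lemma gdist_le: "(E ^^ d) u w \<Longrightarrow> gdist E u w \<le> d"
  unfolding gdist_def by (rule Least_le)

lemma gdist_path: "(E ^^ d) u w \<Longrightarrow> (E ^^ gdist E u w) u w"
  unfolding gdist_def by (rule LeastI)

lemma gdist_ge1: "(E ^^ d) u w \<Longrightarrow> u \<noteq> w \<Longrightarrow> gdist E u w \<ge> 1"
proof -
  assume a: "(E ^^ d) u w" "u \<noteq> w"
  have p: "(E ^^ gdist E u w) u w" by (rule gdist_path[OF a(1)])
  have "gdist E u w \<noteq> 0" using p a(2) by (intro notI) simp
  then show ?thesis by linarith
qed

lemma gdist_ge2: "(E ^^ d) u w \<Longrightarrow> u \<noteq> w \<Longrightarrow> \<not> E u w \<Longrightarrow> gdist E u w \<ge> 2"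
proof -
  assume a: "(E ^^ d) u w" "u \<noteq> w" "\<not> E u w"
  have p: "(E ^^ gdist E u w) u w" by (rule gdist_path[OF a(1)])
  have "gdist E u w \<noteq> 0" using p a(2) by (intro notI) simp
  moreover have "gdist E u w \<noteq> 1"
  proof
    assume g1: "gdist E u w = 1"
    have "(E ^^ 1) u w" using p g1 by metis
    then show False using a(3) relpowp_1 by metis
  qed
  ultimately show ?thesis by linarith
qed

lemma gdist_1: "E u w \<Longrightarrow> u \<noteq> w \<Longrightarrow> gdist E u w = 1"
  using gdist_le[where E=E and d=1 and u=u and w=w] gdist_ge1[where E=E and d=1 and u=u and w=w] by (simp add: eq_OO)

lemma gdist_2: "E u x \<Longrightarrow> E x w \<Longrightarrow> u \<noteq> w \<Longrightarrow> \<not> E u w \<Longrightarrow> gdist E u w = 2"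
proof -
  assume a: "E u x" "E x w" "u \<noteq> w" "\<not> E u w"
  have p: "(E ^^ 2) u w" using a by (auto simp: numeral_2_eq_2 intro: relpowp_Suc_I2[of E u x])
  show ?thesis using gdist_le[OF p] gdist_ge2[OF p a(3,4)] by simp
qed

lemma conn_path:
  assumes "connected_graph V E" "u \<in> V" "w \<in> V"
  shows "\<exists>d. (E ^^ d) u w"
  using assms unfolding connected_graph_def by (auto intro: rtranclp_imp_relpowp)

lemma DM_sym: "(\<And>a b. E a b \<Longrightarrow> E b a) \<Longrightarrow> DM E u w = DM E w u"
  unfolding DM_def using gdist_sym by metis

lemma dist_eig_iff: "dist_eigenvalue V E \<mu> = eigp (DM E) V \<mu>"
  unfolding dist_eigenvalue_def eigp_def DM_def by simp

lemma lam_def': "lambda1_dist V E = Max {\<mu>. eigp (DM E) V \<mu>}"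
  unfolding lambda1_dist_def dist_eig_iff by simp

lemma lam_ge:
  assumes "finite V" "\<And>a b. E a b \<Longrightarrow> E b a" "eigp (DM E) V \<mu>"
  shows "\<mu> \<le> lambda1_dist V E"
  unfolding lam_def' using assms eig_finite[of V "DM E"] DM_sym[of E] by (intro Max_ge) auto

lemma lam_le:
  assumes "finite V" "\<And>a b. E a b \<Longrightarrow> E b a" "eigp (DM E) V \<theta>"
    and "\<And>\<mu>. eigp (DM E) V \<mu> \<Longrightarrow> \<mu> \<le> \<theta>"
  shows "lambda1_dist V E \<le> \<theta>"
  unfolding lam_def' using assms eig_finite[of V "DM E"] DM_sym[of E]
  by (subst Max_le_iff) auto

lemma lam_rayleigh:
  assumes "finite V" "\<And>a b. E a b \<Longrightarrow> E b a" "nsq V y > 0"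
  shows "qf (DM E) V y \<le> lambda1_dist V E * nsq V y"
proof -
  obtain \<mu> where "eigp (DM E) V \<mu>" "qf (DM E) V y \<le> \<mu> * nsq V y"
    using rayleigh_eig[of V "DM E" y] assms DM_sym[of E] by blast
  moreover have "\<mu> \<le> lambda1_dist V E" using lam_ge assms calculation(1) by blast
  ultimately show ?thesis using assms(3) mult_right_mono[of \<mu> "lambda1_dist V E" "nsq V y"] by linarith
qed

lemma lam_collatz:
  assumes "finite V" "\<And>a b. E a b \<Longrightarrow> E b a"
    and ypos: "\<And>u. u \<in> V \<Longrightarrow> y u > 0"
    and ey: "\<And>u. u \<in> V \<Longrightarrow> (\<Sum>w\<in>V. DM E u w * y w) = \<theta> * y u"
    and ne: "V \<noteq> {}"
  shows "lambda1_dist V E \<le> \<theta>"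
proof (rule lam_le[OF assms(1,2)])
  show "eigp (DM E) V \<theta>" unfolding eigp_def using ne ypos ey
    by (intro exI[of _ y]) (auto intro!: less_imp_neq[symmetric])
  show "\<mu> \<le> \<theta>" if "eigp (DM E) V \<mu>" for \<mu>
    by (rule collatz[OF assms(1) _ ypos ey that]) (simp add: DM_def)
qed

lemma sg_fin: "simple_graph V E \<Longrightarrow> finite V" by (simp add: simple_graph_def)
lemma sg_sym: "simple_graph V E \<Longrightarrow> E a b \<Longrightarrow> E b a" by (simp add: simple_graph_def)
lemma sg_in: "simple_graph V E \<Longrightarrow> E a b \<Longrightarrow> a \<in> V \<and> b \<in> V" by (simp add: simple_graph_def)
lemma sg_irr: "simple_graph V E \<Longrightarrow> \<not> E a a" by (simp add: simple_graph_def)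

locale gs =
  fixes V :: "'a set" and E :: "'a \<Rightarrow> 'a \<Rightarrow> bool" and S :: "'a set"
  assumes sg: "simple_graph V E" and sub: "S \<subseteq> V"
begin

definition "W = V - S"
definition "E' = del_edges E S"
definition "cmp u = {w \<in> W. E'\<^sup>*\<^sup>* u w}"
definition "I = {v \<in> W. \<forall>w\<in>W. \<not> E' v w}"
definition "Qs = Sigma W (\<lambda>u. W - cmp u)"
definition "F = {C \<in> cmp ` W. odd (card C) \<and> card C \<ge> 3}"

lemma finV: "finite V" using sg by (rule sg_fin)
lemma finW: "finite W" using finV by (simp add: W_def)
lemma E'_W: "E' a b \<Longrightarrow> a \<in> W \<and> b \<in> W"
  using sg_in[OF sg] by (auto simp: E'_def del_edges_def W_def)
lemma E'_sym: "E' a b \<Longrightarrow> E' b a"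
  using sg_sym[OF sg] by (auto simp: E'_def del_edges_def)
lemma E'_E: "E' a b \<Longrightarrow> E a b" by (simp add: E'_def del_edges_def)
lemma E_E': "E a b \<Longrightarrow> a \<in> W \<Longrightarrow> b \<in> W \<Longrightarrow> E' a b" by (simp add: E'_def del_edges_def W_def)

lemma rt_sym: "E'\<^sup>*\<^sup>* a b \<Longrightarrow> E'\<^sup>*\<^sup>* b a"
proof (induction rule: rtranclp_induct)
  case base then show ?case by simp
next
  case (step y z)
  then show ?case using E'_sym[of y z] converse_rtranclp_into_rtranclp[of E' z y a] by blast
qed

lemma rt_W: "E'\<^sup>*\<^sup>* a b \<Longrightarrow> a \<in> W \<Longrightarrow> b \<in> W"
  by (induction rule: rtranclp_induct) (auto dest: E'_W)

lemma comp_sub: "cmp u \<subseteq> W" by (auto simp: cmp_def)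
lemma comp_self: "u \<in> W \<Longrightarrow> u \<in> cmp u" by (simp add: cmp_def)
lemma comp_eq: "y \<in> cmp x \<Longrightarrow> cmp y = cmp x"
  unfolding cmp_def using rt_sym by (auto intro: rtranclp_trans)
lemma comp_disj: "C1 \<in> cmp ` W \<Longrightarrow> C2 \<in> cmp ` W \<Longrightarrow> C1 \<noteq> C2 \<Longrightarrow> C1 \<inter> C2 = {}"
  using comp_eq by blast

lemma comp_I: "u \<in> I \<Longrightarrow> cmp u = {u}"
proof -
  assume u: "u \<in> I"
  have "w = u" if "E'\<^sup>*\<^sup>* u w" for w
    using that
  proof (cases rule: converse_rtranclpE)
    case base then show ?thesis by simp
  next
    case (step y)
    then have "y \<in> W" using E'_W by blast
    then show ?thesis using step(1) u by (auto simp: I_def)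
  qed
  then show ?thesis using u by (auto simp: cmp_def I_def)
qed

lemma I_sub: "I \<subseteq> W" by (auto simp: I_def)

lemma I_notin: "u \<in> W - I \<Longrightarrow> x \<in> I \<Longrightarrow> x \<notin> cmp u"
proof
  assume a: "u \<in> W - I" "x \<in> I" "x \<in> cmp u"
  have "cmp x = cmp u" using comp_eq[OF a(3)] .
  moreover have "cmp x = {x}" using comp_I[OF a(2)] .
  moreover have "u \<in> cmp u" using a(1) comp_self by blast
  ultimately have "u = x" by blast
  then show False using a(1,2) by blast
qed

lemma iso_count: "isolated_count W E' = card I"
  by (simp add: isolated_count_def I_def)

lemma odd_cnt: "odd_count W E' = card F"
  by (simp add: odd_count_def F_def components_def cmp_def)

lemma card_Qs: "card Qs = (\<Sum>u\<in>W. card (W - cmp u))"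
  unfolding Qs_def using finW by (simp add: card_SigmaI)

lemma Qs_ge1: "card Qs \<ge> card I * (card W - 1) + (card W - card I) * card I"
proof -
  have fI: "finite I" using finW I_sub finite_subset by blast
  have e1: "card Qs = (\<Sum>u\<in>I. card (W - cmp u)) + (\<Sum>u\<in>W - I. card (W - cmp u))"
    unfolding card_Qs using finW I_sub by (metis sum.subset_diff add.commute)
  have e2: "(\<Sum>u\<in>I. card (W - cmp u)) = (\<Sum>u\<in>I. card W - 1)"
    by (intro sum.cong refl) (use comp_I I_sub finW in \<open>auto simp: card_Diff_singleton\<close>)
  have e3: "(\<Sum>u\<in>W - I. card (W - cmp u)) \<ge> (\<Sum>u\<in>W - I. card I)"
  proof (intro sum_mono)
    fix u assume "u \<in> W - I"
    then have "I \<subseteq> W - cmp u" using I_notin I_sub by blast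
    then show "card I \<le> card (W - cmp u)" using finW by (intro card_mono) auto
  qed
  have e4: "(\<Sum>u\<in>W - I. card I) = (card W - card I) * card I"
    using card_Diff_subset[OF fI I_sub] by simp
  have e5: "(\<Sum>u\<in>I. card W - 1) = card I * (card W - 1)" by simp
  show ?thesis using e1 e2 e3 e4 e5 by linarith
qed

lemma F_sub: "C \<in> F \<Longrightarrow> C \<subseteq> W - I"
proof -
  assume C: "C \<in> F"
  then obtain x where x: "x \<in> W" "C = cmp x" and c3: "card C \<ge> 3" by (auto simp: F_def)
  have "y \<notin> I" if "y \<in> C" for y
  proof
    assume "y \<in> I"
    then have "cmp y = {y}" by (rule comp_I)
    moreover have "cmp y = C" using comp_eq that x by simp
    ultimately show False using c3 by simp
  qed
  then show ?thesis using x comp_sub by blast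
qed

lemma finF: "finite F"
proof -
  have "F \<subseteq> cmp ` W" by (auto simp: F_def)
  then show ?thesis using finW finite_subset by blast
qed

lemma sum_F: "(\<Sum>C\<in>G. card C) = card (\<Union>G)" if "G \<subseteq> F" for G
proof -
  have "finite G" using that finF finite_subset by blast
  moreover have "\<forall>C\<in>G. finite C" using that F_sub finW finite_subset by blast
  moreover have "pairwise disjnt G"
    unfolding pairwise_def disjnt_def
  proof (intro ballI impI)
    fix C1 C2 assume a: "C1 \<in> G" "C2 \<in> G" "C1 \<noteq> C2"
    then have "C1 \<in> cmp ` W" "C2 \<in> cmp ` W" using that by (auto simp: F_def)
    then show "C1 \<inter> C2 = {}" using comp_disj a(3) by blast
  qed
  ultimately show ?thesis by (simp add: card_Union_disjoint)
qed

lemma sum_F_ge: "G \<subseteq> F \<Longrightarrow> 3 * card G \<le> card (\<Union>G)"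
proof -
  assume G: "G \<subseteq> F"
  have "3 * card G = (\<Sum>C\<in>G. 3)" by simp
  also have "\<dots> \<le> (\<Sum>C\<in>G. card C)" using G by (intro sum_mono) (auto simp: F_def)
  also have "\<dots> = card (\<Union>G)" using sum_F[OF G] .
  finally show ?thesis .
qed

lemma F_bound: "3 * card F + card I \<le> card W"
proof -
  have "3 * card F \<le> card (\<Union>F)" by (rule sum_F_ge) simp
  also have "\<dots> \<le> card (W - I)" using F_sub finW by (intro card_mono) auto
  also have "\<dots> = card W - card I" using I_sub finW by (simp add: card_Diff_subset finite_subset)
  finally have "3 * card F \<le> card W - card I" .
  moreover have "card I \<le> card W" using I_sub finW by (rule card_mono[rotated])
  ultimately show ?thesis by linarith
qed

lemma Qs_ge6: "card F \<ge> 3 \<Longrightarrow> card Qs \<ge> 6 * card W"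
proof -
  assume F3: "card F \<ge> 3"
  have "6 \<le> card (W - cmp u)" if u: "u \<in> W" for u
  proof -
    define G where "G = F - {cmp u}"
    have "card F - card {cmp u} \<le> card G" unfolding G_def by (rule diff_card_le_card_Diff) simp
    then have "card G \<ge> 2" using F3 by simp
    then have "6 \<le> card (\<Union>G)" using sum_F_ge[of G] by (auto simp: G_def)
    also have "\<dots> \<le> card (W - cmp u)"
    proof (intro card_mono)
      show "finite (W - cmp u)" using finW by simp
      show "\<Union>G \<subseteq> W - cmp u"
      proof
        fix y assume "y \<in> \<Union>G"
        then obtain C where C: "C \<in> F" "C \<noteq> cmp u" "y \<in> C" by (auto simp: G_def)
        have "C \<in> cmp ` W" using C(1) by (simp add: F_def)
        moreover have "cmp u \<in> cmp ` W" using u by simp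
        ultimately have "C \<inter> cmp u = {}" using comp_disj C(2) by blast
        then show "y \<in> W - cmp u" using C F_sub by blast
      qed
    qed
    finally show ?thesis .
  qed
  then have "(\<Sum>u\<in>W. 6) \<le> (\<Sum>u\<in>W. card (W - cmp u))" by (intro sum_mono) auto
  then show ?thesis unfolding card_Qs by (simp add: mult.commute)
qed

lemma Qs_sub: "Qs \<subseteq> V \<times> V" by (auto simp: Qs_def W_def)

lemma Qs_far:
  assumes "(u, w) \<in> Qs"
  shows "u \<noteq> w \<and> \<not> E u w \<and> u \<in> V \<and> w \<in> V"
proof -
  have a: "u \<in> W" "w \<in> W" "\<not> E'\<^sup>*\<^sup>* u w" using assms by (auto simp: Qs_def cmp_def)
  then have "u \<noteq> w" by auto
  moreover have "\<not> E u w" using a E_E'[of u w] by auto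
  ultimately show ?thesis using a by (auto simp: W_def)
qed

lemma qf_ones:
  assumes conn: "connected_graph V E"
  shows "real (card V * (card V - 1) + card Qs) \<le> qf (DM E) V (\<lambda>_. 1)"
proof -
  have pt: "of_bool (u \<noteq> w) + of_bool ((u, w) \<in> Qs) \<le> DM E u w" if uv: "u \<in> V" "w \<in> V" for u w
  proof -
    obtain d where p: "(E ^^ d) u w" using conn_path[OF conn uv] by blast
    show ?thesis
    proof (cases "(u, w) \<in> Qs")
      case True
      then have f: "u \<noteq> w" "\<not> E u w" using Qs_far by auto
      have "gdist E u w \<ge> 2" by (rule gdist_ge2[OF p f])
      then have "DM E u w \<ge> 2" unfolding DM_def by simp
      moreover have "of_bool (u \<noteq> w) + of_bool ((u, w) \<in> Qs) = (2::real)" using True f by simp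
      ultimately show ?thesis by simp
    next
      case False
      show ?thesis
      proof (cases "u = w")
        case True then show ?thesis using False by (simp add: DM_def)
      next
        case nq: False
        have "gdist E u w \<ge> 1" by (rule gdist_ge1[OF p nq])
        then have "DM E u w \<ge> 1" unfolding DM_def by simp
        moreover have "of_bool (u \<noteq> w) + of_bool ((u, w) \<in> Qs) = (1::real)" using False nq by simp
        ultimately show ?thesis by simp
      qed
    qed
  qed
  have s1: "(\<Sum>u\<in>V. \<Sum>w\<in>V. (of_bool (u \<noteq> w) :: real)) = real (card V * (card V - 1))"
  proof -
    have "(\<Sum>w\<in>V. (of_bool (u \<noteq> w) :: real)) = real (card V - 1)" if "u \<in> V" for u
    proof -
      have "V \<inter> {w. u \<noteq> w} = V - {u}" by auto
      then show ?thesis using finV that by (simp add: card_Diff_singleton)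
    qed
    then have "(\<Sum>u\<in>V. \<Sum>w\<in>V. (of_bool (u \<noteq> w) :: real)) = (\<Sum>u\<in>V. real (card V - 1))"
      by (intro sum.cong) auto
    then show ?thesis by simp
  qed
  have s2: "(\<Sum>u\<in>V. \<Sum>w\<in>V. (of_bool ((u, w) \<in> Qs) :: real)) = real (card Qs)"
  proof -
    have "(\<Sum>u\<in>V. \<Sum>w\<in>V. (of_bool ((u, w) \<in> Qs) :: real)) = (\<Sum>(u,w)\<in>V \<times> V. of_bool ((u, w) \<in> Qs))"
      by (rule sum.cartesian_product)
    also have "\<dots> = (\<Sum>p\<in>V \<times> V. of_bool (p \<in> Qs))" by (intro sum.cong) auto
    also have "\<dots> = real (card ((V \<times> V) \<inter> {p. p \<in> Qs}))" using finV by simp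
    also have "(V \<times> V) \<inter> {p. p \<in> Qs} = Qs" using Qs_sub by auto
    finally show ?thesis .
  qed
  have "real (card V * (card V - 1) + card Qs) = (\<Sum>u\<in>V. \<Sum>w\<in>V. (of_bool (u \<noteq> w) + of_bool ((u, w) \<in> Qs) :: real))"
  proof -
    have "(\<Sum>u\<in>V. \<Sum>w\<in>V. (of_bool (u \<noteq> w) + of_bool ((u, w) \<in> Qs) :: real)) =
      (\<Sum>u\<in>V. \<Sum>w\<in>V. (of_bool (u \<noteq> w) :: real)) + (\<Sum>u\<in>V. \<Sum>w\<in>V. (of_bool ((u, w) \<in> Qs) :: real))"
      by (simp only: sum.distrib)
    then show ?thesis using s1 s2 by linarith
  qed
  also have "\<dots> \<le> (\<Sum>u\<in>V. \<Sum>w\<in>V. DM E u w)" by (intro sum_mono pt)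
  also have "\<dots> = qf (DM E) V (\<lambda>_. 1)" by (simp add: qf_alt)
  finally show ?thesis .
qed

end

lemma del_edges_empty: "del_edges E {} = E"
  by (simp add: del_edges_def fun_eq_iff)

lemma conn_nbr:
  assumes sg: "simple_graph V E" and conn: "connected_graph V E" and v: "v \<in> V" and u: "u \<in> V" "u \<noteq> v"
  shows "\<exists>y\<in>V. E v y"
proof -
  have "E\<^sup>*\<^sup>* v u" using conn v u unfolding connected_graph_def by blast
  then show ?thesis
  proof (cases rule: converse_rtranclpE)
    case base then show ?thesis using u by simp
  next
    case (step y)
    then show ?thesis using sg_in[OF sg step(1)] by blast
  qed
qed

lemma bt_empty:
  assumes sg: "simple_graph V E" and conn: "connected_graph V E" and ev: "even (card V)" and c2: "card V \<ge> 2"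
  shows "bt_value k V E {} = 0"
proof -
  have fin: "finite V" using sg by (rule sg_fin)
  have emp: "{v \<in> V. \<forall>w\<in>V. \<not> E v w} = {}"
  proof -
    have "\<exists>w\<in>V. E v w" if v: "v \<in> V" for v
    proof -
      have "\<exists>u\<in>V. u \<noteq> v"
      proof (rule ccontr)
        assume "\<not> (\<exists>u\<in>V. u \<noteq> v)"
        then have "V \<subseteq> {v}" by blast
        then have "card V \<le> 1" using card_mono[of "{v}" V] by simp
        then show False using c2 by simp
      qed
      then show ?thesis using conn_nbr[OF sg conn v] by blast
    qed
    then show ?thesis by blast
  qed
  have i0: "isolated_count V E = 0" unfolding isolated_count_def emp by simp
  have ne: "V \<noteq> {}" using conn by (simp add: connected_graph_def)
  have "components V E = {V}"
  proof -
    have "{w \<in> V. E\<^sup>*\<^sup>* v w} = V" if "v \<in> V" for v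
      using conn that unfolding connected_graph_def by blast
    then have "components V E = (\<lambda>v. V) ` V" unfolding components_def by (intro image_cong) auto
    then show ?thesis using ne by auto
  qed
  then have o0: "odd_count V E = 0" using ev by (simp add: odd_count_def)
  show ?thesis unfolding bt_value_def Let_def using i0 o0 by (simp add: del_edges_empty)
qed

lemma def_ge:
  assumes "finite V" "S \<subseteq> V"
  shows "bt_value k V E S \<le> def_k k V E"
proof -
  have "{bt_value k V E S | S. S \<subseteq> V} = bt_value k V E ` Pow V" by auto
  then have "finite {bt_value k V E S | S. S \<subseteq> V}" using assms(1) by simp
  then show ?thesis unfolding def_k_def using assms(2) by (intro Max_ge) auto
qed

lemma not_GBC:
  assumes sg: "simple_graph V E" and conn: "connected_graph V E" and ev: "even (card V)" and c2: "card V \<ge> 2"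
    and ng: "\<not> GBC k V E"
  shows "\<exists>S. S \<noteq> {} \<and> S \<subseteq> V \<and> 0 \<le> bt_value k V E S"
proof -
  obtain S where S: "S \<noteq> {}" "k_barrier k V E S" using ng conn ev unfolding GBC_def by blast
  then have "S \<subseteq> V" "bt_value k V E S = def_k k V E" unfolding k_barrier_def by auto
  moreover have "bt_value k V E {} \<le> def_k k V E" using def_ge[OF sg_fin[OF sg]] by blast
  ultimately show ?thesis using bt_empty[OF sg conn ev c2] S(1) by auto
qed

context gs begin

lemma bt_odd: "odd k \<Longrightarrow> bt_value k V E S = int (card F) + int k * int (card I) - int k * int (card S)"
  unfolding bt_value_def Let_def using iso_count odd_cnt by (simp add: W_def E'_def)

lemma cardW: "card W = card V - card S" "card S \<le> card V"
  using finV sub by (auto simp: W_def card_Diff_subset finite_subset card_mono)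

lemma cases_main:
  assumes k: "odd k" "k \<ge> 3" and Sne: "S \<noteq> {}" and bt: "0 \<le> bt_value k V E S"
  shows "(card I < card S \<and> card F \<ge> 3 \<and> card W \<ge> card S + 8)
       \<or> (card I \<ge> card S \<and> card I \<ge> 2) \<or> (card I = 1 \<and> card S = 1)"
proof -
  have s1: "card S \<ge> 1" using Sne finV sub finite_subset by (metis One_nat_def Suc_leI card_gt_0_iff)
  have b: "int k * int (card S) \<le> int (card F) + int k * int (card I)" using bt bt_odd[OF k(1)] by simp
  show ?thesis
  proof (cases "card I < card S")
    case True
    define d where "d = card S - card I"
    have d1: "d \<ge> 1" using True by (simp add: d_def)
    have "int k * int d \<le> int (card F)" using b True by (simp add: d_def of_nat_diff algebra_simps)
    moreover have "3 * int d \<le> int k * int d" using k(2) by (intro mult_right_mono) auto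
    ultimately have f: "3 * int d \<le> int (card F)" by linarith
    then have "card F \<ge> 3" using d1 by linarith
    moreover have "card W \<ge> card S + 8" using F_bound f d1 True by (simp add: d_def) 
    ultimately show ?thesis using True by blast
  next
    case False
    then show ?thesis using s1 by auto
  qed
qed

end

lemma qf_mono:
  fixes M B :: "'a \<Rightarrow> 'a \<Rightarrow> real"
  assumes "\<And>u x. u \<in> V \<Longrightarrow> x \<in> V \<Longrightarrow> B u x \<le> M u x" "\<And>u. u \<in> V \<Longrightarrow> y u > 0"
  shows "qf B V y \<le> qf M V y"
  unfolding qf_alt using assms by (intro sum_mono mult_right_mono) (auto intro: less_imp_le)

lemma qf_mono_strict:
  fixes M B :: "'a \<Rightarrow> 'a \<Rightarrow> real"
  assumes fin: "finite V" and le: "\<And>u x. u \<in> V \<Longrightarrow> x \<in> V \<Longrightarrow> B u x \<le> M u x"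
    and ypos: "\<And>u. u \<in> V \<Longrightarrow> y u > 0"
    and pq: "p \<in> V" "q \<in> V" "B p q + 1 \<le> M p q"
  shows "qf B V y + y p * y q \<le> qf M V y"
proof -
  define g where "g u x = (M u x - B u x) * y u * y x" for u x
  have gnn: "g u x \<ge> 0" if "u \<in> V" "x \<in> V" for u x
    using le[OF that] ypos[OF that(1)] ypos[OF that(2)] by (simp add: g_def)
  have "qf M V y - qf B V y = (\<Sum>u\<in>V. \<Sum>x\<in>V. g u x)"
    unfolding qf_alt g_def by (simp add: sum_subtractf[symmetric] algebra_simps)
  also have "(\<Sum>u\<in>V. \<Sum>x\<in>V. g u x) \<ge> (\<Sum>x\<in>V. g p x)"
    using fin pq(1) gnn by (intro member_le_sum[of p V "\<lambda>u. \<Sum>x\<in>V. g u x"]) (auto intro: sum_nonneg)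
  moreover have "(\<Sum>x\<in>V. g p x) \<ge> g p q"
    using fin pq gnn by (intro member_le_sum) auto
  moreover have "g p q \<ge> y p * y q"
  proof -
    have "1 * (y p * y q) \<le> (M p q - B p q) * (y p * y q)"
      using pq(3) ypos[OF pq(1)] ypos[OF pq(2)] by (intro mult_right_mono) auto
    then show ?thesis by (simp add: g_def mult.assoc)
  qed
  ultimately show ?thesis by linarith
qed

definition Bp :: "'a \<Rightarrow> 'a \<Rightarrow> 'a \<Rightarrow> 'a \<Rightarrow> real" where
  "Bp v w0 u x = (if u = x then 0 else if (u = w0 \<and> x \<noteq> v) \<or> (x = w0 \<and> u \<noteq> v) then 2 else 1)"

definition yp :: "'a \<Rightarrow> 'a \<Rightarrow> real \<Rightarrow> real \<Rightarrow> 'a \<Rightarrow> real" where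
  "yp v w0 a c u = (if u = v then a else if u = w0 then c else 1)"

lemma sum_split2:
  fixes f :: "'a \<Rightarrow> real"
  assumes "finite V" "v \<in> V" "w0 \<in> V" "v \<noteq> w0"
  shows "(\<Sum>x\<in>V. f x) = f v + f w0 + (\<Sum>x\<in>V - {v, w0}. f x)"
proof -
  have "(\<Sum>x\<in>V. f x) = f v + (\<Sum>x\<in>V - {v}. f x)" using assms by (simp add: sum.remove)
  also have "(\<Sum>x\<in>V - {v}. f x) = f w0 + (\<Sum>x\<in>V - {v} - {w0}. f x)"
    using assms by (intro sum.remove) auto
  also have "V - {v} - {w0} = V - {v, w0}" by auto
  finally show ?thesis by (simp add: add.assoc)
qed

lemma pend_rows:
  assumes fin: "finite V" and vw: "v \<in> V" "w0 \<in> V" "v \<noteq> w0" and n: "card V = n"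
    and e1: "(real n - 2) + c = t * a" and e2: "a + 2 * (real n - 2) = t * c"
    and e3: "a + (real n - 3) + 2 * c = t"
    and u: "u \<in> V"
  shows "(\<Sum>x\<in>V. Bp v w0 u x * yp v w0 a c x) = t * yp v w0 a c u"
proof -
  define R where "R = V - {v, w0}"
  have cR: "card R = n - 2" using fin vw n by (simp add: R_def card_Diff_subset)
  have n2: "n \<ge> 2" using fin vw n card_mono[of V "{v, w0}"] by auto
  have cRr: "real (card R) = real n - 2" using cR n2 by simp
  have sp: "(\<Sum>x\<in>V. f x) = f v + f w0 + (\<Sum>x\<in>R. f x)" for f :: "'a \<Rightarrow> real"
    unfolding R_def by (rule sum_split2[OF fin vw])
  have yR: "x \<in> R \<Longrightarrow> yp v w0 a c x = 1" for x by (auto simp: R_def yp_def)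
  consider "u = v" | "u = w0" | "u \<in> R" using u by (auto simp: R_def)
  then show ?thesis
  proof cases
    case 1
    have "(\<Sum>x\<in>R. Bp v w0 u x * yp v w0 a c x) = (\<Sum>x\<in>R. 1)"
      by (intro sum.cong refl) (use 1 vw in \<open>auto simp: Bp_def yp_def R_def\<close>)
    then show ?thesis unfolding sp using 1 vw e1 cRr by (simp add: Bp_def yp_def)
  next
    case 2
    have "(\<Sum>x\<in>R. Bp v w0 u x * yp v w0 a c x) = (\<Sum>x\<in>R. 2)"
      by (intro sum.cong refl) (use 2 vw in \<open>auto simp: Bp_def yp_def R_def\<close>)
    then show ?thesis unfolding sp using 2 vw e2 cRr by (simp add: Bp_def yp_def)
  next
    case 3
    have "(\<Sum>x\<in>R. Bp v w0 u x * yp v w0 a c x) = (\<Sum>x\<in>R. if u = x then 0 else 1)"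
      by (intro sum.cong refl) (use 3 vw in \<open>auto simp: Bp_def yp_def R_def\<close>)
    also have "\<dots> = real (card R) - 1"
    proof -
      have fR: "finite R" using fin by (simp add: R_def)
      have "(\<Sum>x\<in>R. (if u = x then 0 else 1::real)) = 0 + (\<Sum>x\<in>R - {u}. (if u = x then 0 else 1::real))"
        using sum.remove[OF fR 3, of "\<lambda>x. (if u = x then 0 else 1::real)"] by simp
      also have "\<dots> = (\<Sum>x\<in>R - {u}. 1)"
      proof -
        have "(\<Sum>x\<in>R - {u}. if u = x then 0 else 1::real) = (\<Sum>x\<in>R - {u}. 1)" by (rule sum.cong) auto
        then show ?thesis by simp
      qed
      also have "\<dots> = real (card R) - 1"
      proof -
        have "card R > 0" using fR 3 by (subst card_gt_0_iff) blast
        then show ?thesis using fR 3 by (simp add: card_Diff_singleton of_nat_diff)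
      qed
      finally show ?thesis .
    qed
    finally have s: "(\<Sum>x\<in>R. Bp v w0 u x * yp v w0 a c x) = real n - 3" using cRr by simp
    have "Bp v w0 u v * yp v w0 a c v = a" "Bp v w0 u w0 * yp v w0 a c w0 = 2 * c"
      using 3 vw by (auto simp: Bp_def yp_def R_def)
    then show ?thesis unfolding sp using s e3 3 yR[OF 3] by simp
  qed
qed


lemma DM_nonneg: "0 \<le> DM E u x" by (simp add: DM_def)

lemma pendant_core:
  assumes sg: "simple_graph V E" and conn: "connected_graph V E" and n: "card V = n"
    and vw: "v \<in> V" "w0 \<in> V" "v \<noteq> w0" and only: "\<And>x. E w0 x \<Longrightarrow> x = v"
    and ac: "a > 0" "c > 0"
    and e1: "(real n - 2) + c = t * a" and e2: "a + 2 * (real n - 2) = t * c"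
    and e3: "a + (real n - 3) + 2 * c = t"
  shows "(\<forall>u\<in>V. \<forall>x\<in>V. Bp v w0 u x \<le> DM E u x) \<and> qf (Bp v w0) V (yp v w0 a c) = t * nsq V (yp v w0 a c)
     \<and> nsq V (yp v w0 a c) > 0 \<and> (\<forall>u\<in>V. yp v w0 a c u > 0)"
proof -
  have fin: "finite V" using sg by (rule sg_fin)
  have le: "Bp v w0 u x \<le> DM E u x" if ux: "u \<in> V" "x \<in> V" for u x
  proof (cases "u = x")
    case True then show ?thesis by (simp add: Bp_def DM_def)
  next
    case False
    obtain d where p: "(E ^^ d) u x" using conn_path[OF conn ux] by blast
    show ?thesis
    proof (cases "(u = w0 \<and> x \<noteq> v) \<or> (x = w0 \<and> u \<noteq> v)")
      case True
      have "\<not> E u x"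
      proof
        assume "E u x"
        then show False using True only sg_sym[OF sg, of u x] by blast
      qed
      then have "gdist E u x \<ge> 2" using gdist_ge2[OF p False] by blast
      then show ?thesis using True False by (simp add: Bp_def DM_def)
    next
      case nb: False
      have "gdist E u x \<ge> 1" using gdist_ge1[OF p False] .
      moreover have "Bp v w0 u x = 1"
        by (unfold Bp_def, subst if_not_P[OF False], subst if_not_P[OF nb], rule refl)
      ultimately show ?thesis by (simp add: DM_def)
    qed
  qed
  have ypos: "yp v w0 a c u > 0" for u using ac by (simp add: yp_def)
  have rows: "Mv (Bp v w0) V (yp v w0 a c) u = t * yp v w0 a c u" if "u \<in> V" for u
    unfolding Mv_def by (rule pend_rows[OF fin vw n e1 e2 e3 that])
  have "qf (Bp v w0) V (yp v w0 a c) = (\<Sum>u\<in>V. t * (yp v w0 a c u)^2)"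
    unfolding qf_def by (intro sum.cong refl) (simp add: rows power2_eq_square)
  also have "\<dots> = t * nsq V (yp v w0 a c)" by (simp add: nsq_def sum_distrib_left)
  finally have q: "qf (Bp v w0) V (yp v w0 a c) = t * nsq V (yp v w0 a c)" .
  have "(yp v w0 a c v)^2 \<le> nsq V (yp v w0 a c)" unfolding nsq_def using fin vw
    by (intro member_le_sum) auto
  moreover have "(yp v w0 a c v)^2 > 0" using ypos[of v] by simp
  ultimately have "nsq V (yp v w0 a c) > 0" by linarith
  then show ?thesis using le q ypos by blast
qed

lemma pendant_lb:
  assumes sg: "simple_graph V E" and conn: "connected_graph V E" and n: "card V = n"
    and vw: "v \<in> V" "w0 \<in> V" "v \<noteq> w0" and only: "\<And>x. E w0 x \<Longrightarrow> x = v"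
    and ac: "a > 0" "c > 0"
    and e1: "(real n - 2) + c = t * a" and e2: "a + 2 * (real n - 2) = t * c"
    and e3: "a + (real n - 3) + 2 * c = t"
  shows "t \<le> lambda1_dist V E"
    and "p \<in> V \<Longrightarrow> q \<in> V \<Longrightarrow> p \<noteq> q \<Longrightarrow> p \<noteq> w0 \<Longrightarrow> q \<noteq> w0 \<Longrightarrow> \<not> E p q \<Longrightarrow> t < lambda1_dist V E"
proof -
  note core = pendant_core[OF assms]
  define y where "y = yp v w0 a c"
  have fin: "finite V" using sg by (rule sg_fin)
  have sym: "\<And>a b. E a b \<Longrightarrow> E b a" using sg_sym[OF sg] .
  have np: "nsq V y > 0" using core by (simp add: y_def)
  have ray: "qf (DM E) V y \<le> lambda1_dist V E * nsq V y" by (rule lam_rayleigh[OF fin sym np])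
  have mono: "qf (Bp v w0) V y \<le> qf (DM E) V y"
    using core by (intro qf_mono) (auto simp: y_def)
  have qb: "qf (Bp v w0) V y = t * nsq V y" using core by (simp add: y_def)
  show "t \<le> lambda1_dist V E"
    using ray mono qb np by (metis mult_le_cancel_right order_trans less_le_not_le)
  assume pq: "p \<in> V" "q \<in> V" "p \<noteq> q" "p \<noteq> w0" "q \<noteq> w0" "\<not> E p q"
  obtain d where pth: "(E ^^ d) p q" using conn_path[OF conn pq(1,2)] by blast
  have "gdist E p q \<ge> 2" using gdist_ge2[OF pth pq(3,6)] .
  then have "Bp v w0 p q + 1 \<le> DM E p q" using pq by (simp add: Bp_def DM_def)
  then have st: "qf (Bp v w0) V y + y p * y q \<le> qf (DM E) V y"
    using core pq by (intro qf_mono_strict[OF fin]) (auto simp: y_def)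
  have "y p * y q > 0" using core pq by (simp add: y_def)
  then have "t * nsq V y < lambda1_dist V E * nsq V y" using st ray qb by linarith
  then show "t < lambda1_dist V E" using np by (simp add: mult_less_cancel_right)
qed

abbreviation "HE n \<equiv> K1_join_Kn2_K1 n"

lemma HE_sym: "HE n a b \<Longrightarrow> HE n b a" by (auto simp: K1_join_Kn2_K1_def)

lemma HE_iff: "u < n \<Longrightarrow> x < n \<Longrightarrow> HE n u x \<longleftrightarrow> u \<noteq> x \<and> (u = 0 \<or> x = 0 \<or> (u \<noteq> n - 1 \<and> x \<noteq> n - 1))"
proof -
  assume a: "u < n" "x < n"
  have "u < n - 1 \<longleftrightarrow> u \<noteq> n - 1" "x < n - 1 \<longleftrightarrow> x \<noteq> n - 1" using a by linarith+
  then show ?thesis unfolding K1_join_Kn2_K1_def using a by simp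
qed

lemma HE_DM:
  assumes n: "n \<ge> 4" and ux: "u < n" "x < n"
  shows "DM (HE n) u x = Bp 0 (n - 1) u x"
proof (cases "u = x")
  case True then show ?thesis by (simp add: DM_def Bp_def gdist_refl)
next
  case ne: False
  show ?thesis
  proof (cases "HE n u x")
    case True
    then have "gdist (HE n) u x = 1" using gdist_1[where E="HE n" and u=u and w=x] ne by simp
    moreover have "\<not> ((u = n - 1 \<and> x \<noteq> 0) \<or> (x = n - 1 \<and> u \<noteq> 0))"
      using True ne HE_iff[OF ux] n by auto
    ultimately show ?thesis using ne by (simp add: DM_def Bp_def)
  next
    case False
    have c: "(u = n - 1 \<and> x \<noteq> 0) \<or> (x = n - 1 \<and> u \<noteq> 0)" "u \<noteq> 0" "x \<noteq> 0"
      using False ne HE_iff[OF ux] by auto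
    have "0 < n" using n by simp
    then have h1: "HE n u 0" using c(2) HE_iff[OF ux(1), of 0] by simp
    have h2: "HE n 0 x" using c(3) \<open>0 < n\<close> HE_iff[OF _ ux(2), of 0] by simp
    have "gdist (HE n) u x = 2" by (rule gdist_2[OF h1 h2 ne False])
    then show ?thesis using c ne by (simp add: DM_def Bp_def)
  qed
qed

lemma H_lam:
  assumes n: "n \<ge> 4" and ac: "a > 0" "c > 0"
    and e1: "(real n - 2) + c = t * a" and e2: "a + 2 * (real n - 2) = t * c"
    and e3: "a + (real n - 3) + 2 * c = t"
  shows "lambda1_dist {0..<n} (HE n) \<le> t"
proof (rule lam_collatz[where y = "yp 0 (n - 1) a c"])
  show "finite {0..<n}" by simp
  show "HE n a b \<Longrightarrow> HE n b a" for a b by (rule HE_sym)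
  show "yp 0 (n - 1) a c u > 0" for u using ac by (simp add: yp_def)
  show "{0..<n} \<noteq> {}" using n by simp
  fix u assume u: "u \<in> {0..<n}"
  have "(\<Sum>w\<in>{0..<n}. DM (HE n) u w * yp 0 (n - 1) a c w) = (\<Sum>w\<in>{0..<n}. Bp 0 (n - 1) u w * yp 0 (n - 1) a c w)"
    using u n by (intro sum.cong refl) (simp add: HE_DM)
  also have "\<dots> = t * yp 0 (n - 1) a c u"
    by (rule pend_rows[where n=n]) (use n u e1 e2 e3 in auto)
  finally show "(\<Sum>w\<in>{0..<n}. DM (HE n) u w * yp 0 (n - 1) a c w) = t * yp 0 (n - 1) a c u" .
qed


lemma pendant_iso:
  assumes sg: "simple_graph V E" and n: "card V = n"
    and vw: "v \<in> V" "w0 \<in> V" "v \<noteq> w0" and Ewv: "E w0 v" and only: "\<And>x. E w0 x \<Longrightarrow> x = v"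
    and all: "\<And>p q. p \<in> V \<Longrightarrow> q \<in> V \<Longrightarrow> p \<noteq> q \<Longrightarrow> p \<noteq> w0 \<Longrightarrow> q \<noteq> w0 \<Longrightarrow> E p q"
  shows "graph_iso V E {0..<n} (HE n)"
proof -
  have fin: "finite V" using sg by (rule sg_fin)
  define R where "R = V - {v, w0}"
  have fR: "finite R" using fin by (simp add: R_def)
  have cR: "card R = n - 2" using fin vw n by (simp add: R_def card_Diff_subset)
  have n2: "n \<ge> 2" using fin vw n card_mono[of V "{v, w0}"] by auto
  have "card R = card {1..<n-1}" using cR by simp
  then obtain g where g: "bij_betw g R {1..<n-1}" using finite_same_card_bij[OF fR finite_atLeastLessThan] by blast
  have gR: "1 \<le> g x \<and> g x < n - 1" if "x \<in> R" for x
  proof -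
    have "g x \<in> {1..<n-1}" using bij_betwE[OF g] that by blast
    then show ?thesis by simp
  qed
  define f where "f x = (if x = v then 0 else if x = w0 then n - 1 else g x)" for x
  have fv: "f v = 0" by (simp add: f_def)
  have fw: "f w0 = n - 1" using vw by (simp add: f_def)
  have fr: "x \<in> R \<Longrightarrow> f x = g x" for x by (auto simp: f_def R_def)
  have Vsplit: "V = {v, w0} \<union> R" using vw by (auto simp: R_def)
  have VR: "x \<in> V \<Longrightarrow> x \<noteq> v \<Longrightarrow> x \<noteq> w0 \<Longrightarrow> x \<in> R" for x by (simp add: R_def)
  have z: "f x = 0 \<longleftrightarrow> x = v" if "x \<in> V" for x
  proof (cases "x = v")
    case True then show ?thesis using fv by simp
  next
    case False
    show ?thesis
    proof (cases "x = w0")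
      case True then show ?thesis using fw n2 False by simp
    next
      case False2: False
      then show ?thesis using fr[OF VR[OF that False False2]] gR[OF VR[OF that False False2]] False by simp
    qed
  qed
  have l: "f x = n - 1 \<longleftrightarrow> x = w0" if "x \<in> V" for x
  proof (cases "x = w0")
    case True then show ?thesis using fw by simp
  next
    case False
    show ?thesis
    proof (cases "x = v")
      case True then show ?thesis using fv n2 False by simp
    next
      case False2: False
      then show ?thesis using fr[OF VR[OF that False2 False]] gR[OF VR[OF that False2 False]] False by simp
    qed
  qed
  have inj: "inj_on f V"
  proof (rule inj_onI)
    fix x y assume xy: "x \<in> V" "y \<in> V" "f x = f y"
    show "x = y"
    proof (cases "x = v \<or> x = w0 \<or> y = v \<or> y = w0")
      case True
      then show ?thesis using z[OF xy(1)] z[OF xy(2)] l[OF xy(1)] l[OF xy(2)] xy(3) by metis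
    next
      case False
      then have "x \<in> R" "y \<in> R" using VR xy by auto
      then show ?thesis using fr xy(3) g unfolding bij_betw_def inj_on_def by metis
    qed
  qed
  have img: "f ` V = {0..<n}"
  proof -
    have "f ` R = g ` R" using fr by (auto intro: image_cong)
    also have "\<dots> = {1..<n-1}" using g by (simp add: bij_betw_def)
    finally have "f ` V = {0, n - 1} \<union> {1..<n-1}" unfolding Vsplit using fv fw by auto
    also have "\<dots> = {0..<n}" using n2 by auto
    finally show ?thesis .
  qed
  have bij: "bij_betw f V {0..<n}" using inj img by (simp add: bij_betw_def)
  have adj: "E x y \<longleftrightarrow> HE n (f x) (f y)" if xy: "x \<in> V" "y \<in> V" for x y
  proof -
    have fx: "f x < n" "f y < n" using img xy by auto
    have fxy: "f x = f y \<longleftrightarrow> x = y" using inj_on_eq_iff[OF inj xy] .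
    note zz = z[OF xy(1)] z[OF xy(2)] l[OF xy(1)] l[OF xy(2)]
    have "E x y \<longleftrightarrow> x \<noteq> y \<and> (x = v \<or> y = v \<or> (x \<noteq> w0 \<and> y \<noteq> w0))"
    proof
      assume e: "E x y"
      have "x \<noteq> y" using e sg_irr[OF sg] by metis
      moreover have "x = v \<or> y = v \<or> (x \<noteq> w0 \<and> y \<noteq> w0)"
        using e only sg_sym[OF sg] by blast
      ultimately show "x \<noteq> y \<and> (x = v \<or> y = v \<or> (x \<noteq> w0 \<and> y \<noteq> w0))" by blast
    next
      assume h: "x \<noteq> y \<and> (x = v \<or> y = v \<or> (x \<noteq> w0 \<and> y \<noteq> w0))"
      show "E x y"
      proof (cases "x \<noteq> w0 \<and> y \<noteq> w0")
        case True then show ?thesis using all xy h by blast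
      next
        case False
        show ?thesis
        proof (cases "x = w0")
          case True
          then have "y = v" using h vw(3) by blast
          then show ?thesis using True Ewv by simp
        next
          case xw: False
          then have yw: "y = w0" using False by blast
          then have "x = v" using h vw(3) by blast
          then show ?thesis using yw sg_sym[OF sg Ewv] by simp
        qed
      qed
    qed
    also have "\<dots> \<longleftrightarrow> HE n (f x) (f y)" unfolding HE_iff[OF fx] using fxy zz by simp
    finally show ?thesis .
  qed
  show ?thesis unfolding graph_iso_def using bij adj by blast
qed

definition Bs :: "'a set \<Rightarrow> 'a \<Rightarrow> 'a \<Rightarrow> real" where
  "Bs S u x = (if u = x then 0 else if u \<notin> S \<and> x \<notin> S then 2 else 1)"

definition ys :: "'a set \<Rightarrow> real \<Rightarrow> 'a \<Rightarrow> real" where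
  "ys S b u = (if u \<in> S then 1 else b)"

lemma sum_minus_one:
  assumes "finite A" "u \<in> A"
  shows "(\<Sum>x\<in>A. (if u = x then 0 else c::real)) = (real (card A) - 1) * c"
proof -
  have "(\<Sum>x\<in>A. (if u = x then 0 else c::real)) = 0 + (\<Sum>x\<in>A - {u}. (if u = x then 0 else c))"
    using sum.remove[OF assms, of "\<lambda>x. (if u = x then 0 else c::real)"] by simp
  also have "(\<Sum>x\<in>A - {u}. (if u = x then 0 else c)) = (\<Sum>x\<in>A - {u}. c)" by (rule sum.cong) auto
  also have "\<dots> = real (card (A - {u})) * c" by simp
  also have "card (A - {u}) = card A - 1" using assms by (simp add: card_Diff_singleton)
  also have "card A \<ge> 1" using assms by (metis One_nat_def Suc_leI card_gt_0_iff empty_iff)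
  then have "real (card A - 1) = real (card A) - 1" by (simp add: of_nat_diff)
  finally show ?thesis by simp
qed

lemma s_rows:
  assumes fin: "finite V" and S: "S \<subseteq> V" and cS: "card S = s" and cW: "card (V - S) = s"
    and e1: "(real s - 1) + real s * b = t" and e2: "real s + 2 * (real s - 1) * b = t * b"
    and u: "u \<in> V"
  shows "(\<Sum>x\<in>V. Bs S u x * ys S b x) = t * ys S b u"
proof -
  have fS: "finite S" using fin S finite_subset by blast
  have fW: "finite (V - S)" using fin by simp
  have sp: "(\<Sum>x\<in>V. f x) = (\<Sum>x\<in>S. f x) + (\<Sum>x\<in>V - S. f x)" for f :: "'a \<Rightarrow> real"
    using sum.subset_diff[OF S fin, of f] by (simp add: add.commute)
  show ?thesis
  proof (cases "u \<in> S")
    case True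
    have a: "(\<Sum>x\<in>S. Bs S u x * ys S b x) = (\<Sum>x\<in>S. if u = x then 0 else 1)"
      by (rule sum.cong) (auto simp: Bs_def ys_def True)
    have b: "(\<Sum>x\<in>V - S. Bs S u x * ys S b x) = (\<Sum>x\<in>V - S. b)"
      by (rule sum.cong) (auto simp: Bs_def ys_def True)
    show ?thesis unfolding sp a b sum_minus_one[OF fS True] using cS cW e1 True by (simp add: ys_def)
  next
    case False
    then have uW: "u \<in> V - S" using u by simp
    have a: "(\<Sum>x\<in>S. Bs S u x * ys S b x) = (\<Sum>x\<in>S. 1)"
      by (rule sum.cong) (auto simp: Bs_def ys_def False)
    have b: "(\<Sum>x\<in>V - S. Bs S u x * ys S b x) = (\<Sum>x\<in>V - S. if u = x then 0 else 2 * b)"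
      by (rule sum.cong) (auto simp: Bs_def ys_def False)
    show ?thesis unfolding sp a b sum_minus_one[OF fW uW] using cS cW e2 False by (simp add: ys_def algebra_simps)
  qed
qed

lemma s_core:
  assumes sg: "simple_graph V E" and conn: "connected_graph V E"
    and S: "S \<subseteq> V" and cS: "card S = s" and cW: "card (V - S) = s"
    and only: "\<And>w x. w \<in> V - S \<Longrightarrow> E w x \<Longrightarrow> x \<in> S"
    and bp: "b > 0"
    and e1: "(real s - 1) + real s * b = t" and e2: "real s + 2 * (real s - 1) * b = t * b"
  shows "(\<forall>u\<in>V. \<forall>x\<in>V. Bs S u x \<le> DM E u x) \<and> qf (Bs S) V (ys S b) = t * nsq V (ys S b)
     \<and> nsq V (ys S b) > 0 \<and> (\<forall>u\<in>V. ys S b u > 0)"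
proof -
  have fin: "finite V" using sg by (rule sg_fin)
  have le: "Bs S u x \<le> DM E u x" if ux: "u \<in> V" "x \<in> V" for u x
  proof (cases "u = x")
    case True then show ?thesis by (simp add: Bs_def DM_def)
  next
    case False
    obtain d where p: "(E ^^ d) u x" using conn_path[OF conn ux] by blast
    show ?thesis
    proof (cases "u \<notin> S \<and> x \<notin> S")
      case True
      have "\<not> E u x"
      proof
        assume "E u x"
        then show False using True only ux by blast
      qed
      then have "gdist E u x \<ge> 2" using gdist_ge2[OF p False] by blast
      then show ?thesis using True False by (simp add: Bs_def DM_def)
    next
      case nb: False
      have "gdist E u x \<ge> 1" using gdist_ge1[OF p False] .
      moreover have "Bs S u x = 1"
        by (unfold Bs_def, subst if_not_P[OF False], subst if_not_P[OF nb], rule refl)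
      ultimately show ?thesis by (simp add: DM_def)
    qed
  qed
  have ypos: "ys S b u > 0" for u using bp by (simp add: ys_def)
  have rows: "Mv (Bs S) V (ys S b) u = t * ys S b u" if "u \<in> V" for u
    unfolding Mv_def by (rule s_rows[OF fin S cS cW e1 e2 that])
  have "qf (Bs S) V (ys S b) = (\<Sum>u\<in>V. t * (ys S b u)^2)"
    unfolding qf_def by (intro sum.cong refl) (simp add: rows power2_eq_square)
  also have "\<dots> = t * nsq V (ys S b)" by (simp add: nsq_def sum_distrib_left)
  finally have q: "qf (Bs S) V (ys S b) = t * nsq V (ys S b)" .
  have "V \<noteq> {}" using conn by (simp add: connected_graph_def)
  then obtain v where v: "v \<in> V" by blast
  have "(ys S b v)^2 \<le> nsq V (ys S b)" unfolding nsq_def using fin v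
    by (intro member_le_sum) auto
  moreover have "(ys S b v)^2 > 0" using ypos[of v] by simp
  ultimately have "nsq V (ys S b) > 0" by linarith
  then show ?thesis using le q ypos by blast
qed

lemma s_lb:
  assumes sg: "simple_graph V E" and conn: "connected_graph V E"
    and S: "S \<subseteq> V" and cS: "card S = s" and cW: "card (V - S) = s"
    and only: "\<And>w x. w \<in> V - S \<Longrightarrow> E w x \<Longrightarrow> x \<in> S"
    and bp: "b > 0"
    and e1: "(real s - 1) + real s * b = t" and e2: "real s + 2 * (real s - 1) * b = t * b"
  shows "t \<le> lambda1_dist V E"
    and "p \<in> V \<Longrightarrow> q \<in> V \<Longrightarrow> p \<noteq> q \<Longrightarrow> p \<in> S \<or> q \<in> S \<Longrightarrow> \<not> E p q \<Longrightarrow> t < lambda1_dist V E"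
proof -
  note core = s_core[OF assms]
  define y where "y = ys S b"
  have fin: "finite V" using sg by (rule sg_fin)
  have sym: "\<And>a b. E a b \<Longrightarrow> E b a" using sg_sym[OF sg] .
  have np: "nsq V y > 0" using core by (simp add: y_def)
  have ray: "qf (DM E) V y \<le> lambda1_dist V E * nsq V y" by (rule lam_rayleigh[OF fin sym np])
  have mono: "qf (Bs S) V y \<le> qf (DM E) V y"
    using core by (intro qf_mono) (auto simp: y_def)
  have qb: "qf (Bs S) V y = t * nsq V y" using core by (simp add: y_def)
  show "t \<le> lambda1_dist V E"
    using ray mono qb np by (metis mult_le_cancel_right order_trans less_le_not_le)
  assume pq: "p \<in> V" "q \<in> V" "p \<noteq> q" "p \<in> S \<or> q \<in> S" "\<not> E p q"
  obtain d where pth: "(E ^^ d) p q" using conn_path[OF conn pq(1,2)] by blast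
  have "gdist E p q \<ge> 2" using gdist_ge2[OF pth pq(3,5)] .
  then have "Bs S p q + 1 \<le> DM E p q" using pq by (auto simp: Bs_def DM_def)
  then have st: "qf (Bs S) V y + y p * y q \<le> qf (DM E) V y"
    using core pq by (intro qf_mono_strict[OF fin]) (auto simp: y_def)
  have "y p * y q > 0" using core pq by (simp add: y_def)
  then have "t * nsq V y < lambda1_dist V E * nsq V y" using st ray qb by linarith
  then show "t < lambda1_dist V E" using np by (simp add: mult_less_cancel_right)
qed


lemma SE_sym: "S_graph n k a b \<Longrightarrow> S_graph n k b a" by (auto simp: S_graph_def)

lemma SE_DM:
  assumes s1: "s \<ge> 1" and ux: "u < n" "x < n" and sn: "s \<le> n"
  shows "DM (S_graph n s) u x = Bs {0..<s} u x"
proof (cases "u = x")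
  case True then show ?thesis by (simp add: DM_def Bs_def gdist_refl)
next
  case ne: False
  show ?thesis
  proof (cases "u < s \<or> x < s")
    case True
    then have "S_graph n s u x" using ux ne by (simp add: S_graph_def)
    then have "gdist (S_graph n s) u x = 1" using gdist_1[where E="S_graph n s" and u=u and w=x] ne by simp
    then show ?thesis using ne True by (simp add: DM_def Bs_def)
  next
    case False
    have h1: "S_graph n s u 0" using ux s1 sn ne False by (simp add: S_graph_def)
    have h2: "S_graph n s 0 x" using ux s1 sn ne False by (simp add: S_graph_def)
    have h3: "\<not> S_graph n s u x" using False by (simp add: S_graph_def)
    have "gdist (S_graph n s) u x = 2" by (rule gdist_2[OF h1 h2 ne h3])
    then show ?thesis using ne False by (simp add: DM_def Bs_def)
  qed
qed

lemma SG_lam: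
  assumes s1: "s \<ge> 1" and n: "n = 2 * s" and bp: "b > 0"
    and e1: "(real s - 1) + real s * b = t" and e2: "real s + 2 * (real s - 1) * b = t * b"
  shows "lambda1_dist {0..<n} (S_graph n s) \<le> t"
proof (rule lam_collatz[where y = "ys {0..<s} b"])
  show "finite {0..<n}" by simp
  show "S_graph n s a c \<Longrightarrow> S_graph n s c a" for a c by (rule SE_sym)
  show "ys {0..<s} b u > 0" for u using bp by (simp add: ys_def)
  show "{0..<n} \<noteq> {}" using n s1 by simp
  fix u assume u: "u \<in> {0..<n}"
  have "(\<Sum>w\<in>{0..<n}. DM (S_graph n s) u w * ys {0..<s} b w) = (\<Sum>w\<in>{0..<n}. Bs {0..<s} u w * ys {0..<s} b w)"
    using u n s1 by (intro sum.cong refl) (simp add: SE_DM)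
  also have "\<dots> = t * ys {0..<s} b u"
  proof (rule s_rows[where s=s])
    show "card ({0..<n} - {0..<s}) = s" using n by simp
  qed (use n u e1 e2 in auto)
  finally show "(\<Sum>w\<in>{0..<n}. DM (S_graph n s) u w * ys {0..<s} b w) = t * ys {0..<s} b u" .
qed

lemma S_iso:
  assumes sg: "simple_graph V E" and n: "card V = n" and n2: "n = 2 * s"
    and S: "S \<subseteq> V" and cS: "card S = s"
    and only: "\<And>w x. w \<in> V - S \<Longrightarrow> E w x \<Longrightarrow> x \<in> S"
    and all: "\<And>p q. p \<in> V \<Longrightarrow> q \<in> V \<Longrightarrow> p \<noteq> q \<Longrightarrow> p \<in> S \<or> q \<in> S \<Longrightarrow> E p q"
  shows "graph_iso V E {0..<n} (S_graph n s)"
proof -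
  have fin: "finite V" using sg by (rule sg_fin)
  have fS: "finite S" using fin S finite_subset by blast
  have cW: "card (V - S) = s" using fin S n n2 cS by (simp add: card_Diff_subset fS)
  have "card S = card {0..<s}" using cS by simp
  then obtain g1 where g1: "bij_betw g1 S {0..<s}" using finite_same_card_bij[OF fS finite_atLeastLessThan] by blast
  have "card (V - S) = card {s..<n}" using cW n2 by simp
  moreover have "finite (V - S)" using fin by simp
  ultimately obtain g2 where g2: "bij_betw g2 (V - S) {s..<n}"
    using finite_same_card_bij[OF _ finite_atLeastLessThan] by blast
  define f where "f x = (if x \<in> S then g1 x else g2 x)" for x
  have b1: "bij_betw f S {0..<s}" using g1 by (rule bij_betw_cong[THEN iffD1, rotated]) (simp add: f_def)
  have b2: "bij_betw f (V - S) {s..<n}" using g2 by (rule bij_betw_cong[THEN iffD1, rotated]) (simp add: f_def)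
  have "bij_betw f (S \<union> (V - S)) ({0..<s} \<union> {s..<n})" by (rule bij_betw_combine[OF b1 b2]) auto
  moreover have "S \<union> (V - S) = V" using S by auto
  moreover have "{0..<s} \<union> {s..<n} = {0..<n}" using n2 by auto
  ultimately have bij: "bij_betw f V {0..<n}" by simp
  have fs: "f x < s \<longleftrightarrow> x \<in> S" if "x \<in> V" for x
  proof (cases "x \<in> S")
    case True then show ?thesis using bij_betwE[OF b1] by auto
  next
    case False
    then have "f x \<in> {s..<n}" using bij_betwE[OF b2] that by blast
    then show ?thesis using False by simp
  qed
  have adj: "E x y \<longleftrightarrow> S_graph n s (f x) (f y)" if xy: "x \<in> V" "y \<in> V" for x y
  proof -
    have fx: "f x < n" "f y < n" using bij_betwE[OF bij] xy by auto
    have fxy: "f x = f y \<longleftrightarrow> x = y" using inj_on_eq_iff[OF bij_betw_imp_inj_on[OF bij] xy] .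
    have "E x y \<longleftrightarrow> x \<noteq> y \<and> (x \<in> S \<or> y \<in> S)"
    proof
      assume e: "E x y"
      have "x \<noteq> y" using e sg_irr[OF sg] by metis
      moreover have "x \<in> S \<or> y \<in> S" using e only xy by blast
      ultimately show "x \<noteq> y \<and> (x \<in> S \<or> y \<in> S)" by blast
    next
      assume "x \<noteq> y \<and> (x \<in> S \<or> y \<in> S)"
      then show "E x y" using all xy by blast
    qed
    also have "\<dots> \<longleftrightarrow> S_graph n s (f x) (f y)" unfolding S_graph_def using fx fxy fs[OF xy(1)] fs[OF xy(2)] by simp
    finally show ?thesis .
  qed
  show ?thesis unfolding graph_iso_def using bij adj by blast
qed

definition aH :: "real \<Rightarrow> real \<Rightarrow> real" where "aH n t = (n - 2) * (t + 2) / (t^2 - 1)"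
definition cH :: "real \<Rightarrow> real \<Rightarrow> real" where "cH n t = (aH n t + 2 * (n - 2)) / t"
definition gH :: "real \<Rightarrow> real \<Rightarrow> real" where "gH n t = aH n t + (n - 3) + 2 * cH n t - t"

lemma H_root:
  assumes n: "n \<ge> 4" and lo: "1 < lo" "lo \<le> hi" and glo: "gH n lo \<ge> 0" and ghi: "gH n hi \<le> 0"
  shows "\<exists>t. lo \<le> t \<and> t \<le> hi \<and> aH n t > 0 \<and> cH n t > 0 \<and>
     (n - 2) + cH n t = t * aH n t \<and> aH n t + 2 * (n - 2) = t * cH n t \<and> aH n t + (n - 3) + 2 * cH n t = t"
proof -
  have cont: "continuous_on {lo..hi} (gH n)"
  proof -
    have sq: "(t^2 = (1::real)) = False" if "1 < t" for t
    proof -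
      have "1 < t^2" using one_less_power[of t 2] that by simp
      then show ?thesis by simp
    qed
    show ?thesis unfolding gH_def[abs_def] cH_def aH_def
      by (intro continuous_intros) (use lo in \<open>auto simp: sq\<close>)
  qed
  obtain t where t: "lo \<le> t" "t \<le> hi" "gH n t = 0" using IVT2'[of "gH n" hi 0 lo, OF ghi glo lo(2) cont] by blast
  have t1: "t > 1" using t lo by simp
  have t2: "t^2 - 1 > 0" using t1 one_less_power[of t 2] by simp
  have a: "aH n t > 0" unfolding aH_def using n t1 t2 by (intro divide_pos_pos mult_pos_pos) auto
  have c: "cH n t > 0" unfolding cH_def using a n t1 by (intro divide_pos_pos) auto
  have e2: "aH n t + 2 * (n - 2) = t * cH n t" unfolding cH_def using t1 by simp
  have ea: "aH n t * (t^2 - 1) = (n - 2) * (t + 2)" unfolding aH_def using t2 by simp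
  have e1: "(n - 2) + cH n t = t * aH n t"
  proof -
    have "t * (t * aH n t - cH n t) = t * (n - 2)"
      using e2 ea by (simp add: algebra_simps power2_eq_square)
    then show ?thesis using t1 by simp
  qed
  have e3: "aH n t + (n - 3) + 2 * cH n t = t" using t(3) by (simp add: gH_def)
  show ?thesis using t a c e1 e2 e3 by blast
qed

lemma gH_lo: assumes "n \<ge> 4" shows "gH n (n - 1) > 0"
proof -
  have t2: "(n - 1)^2 - 1 = n * (n - 2)" by (simp add: power2_eq_square algebra_simps)
  have a: "aH n (n - 1) = (n + 1) / n" unfolding aH_def t2 using assms by (simp add: field_simps)
  have ap: "aH n (n - 1) > 0" using a assms by simp
  have "cH n (n - 1) \<ge> 1" unfolding cH_def using ap assms by (simp add: le_divide_eq)
  then show ?thesis unfolding gH_def using ap by linarith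
qed

lemma gH_hi: assumes "n \<ge> 4" shows "gH n (n + 2) < 0"
proof -
  have "6 * 6 \<le> (n + 2) * (n + 2)" using mult_mono[of 6 "n+2" 6 "n+2"] assms by simp
  then have t2: "(n + 2)^2 - 1 > 0" by (simp add: power2_eq_square)
  have "aH n (n + 2) < 1" unfolding aH_def using t2 assms by (simp add: divide_less_eq power2_eq_square algebra_simps)
  moreover have "aH n (n + 2) \<ge> 0" unfolding aH_def using t2 assms by simp
  ultimately have "cH n (n + 2) < 2" unfolding cH_def using assms by (simp add: divide_less_eq)
  then show ?thesis unfolding gH_def using \<open>aH n (n + 2) < 1\<close> by linarith
qed

definition bS :: "real \<Rightarrow> real \<Rightarrow> real" where "bS s t = s / (t - 2 * s + 2)"
definition hS :: "real \<Rightarrow> real \<Rightarrow> real" where "hS s t = (t - 2 * s + 2) * (t - s + 1) - s^2"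

lemma S_root:
  assumes s: "s \<ge> 1" and hi: "hS s hi > 0" "2 * s - 2 \<le> hi"
  shows "\<exists>t. t < hi \<and> bS s t > 0 \<and> (s - 1) + s * bS s t = t \<and> s + 2 * (s - 1) * bS s t = t * bS s t"
proof -
  have cont: "continuous_on {2 * s - 2..hi} (hS s)" unfolding hS_def[abs_def] by (intro continuous_intros)
  have h0: "hS s (2 * s - 2) \<le> 0" by (simp add: hS_def)
  obtain t where t: "2 * s - 2 \<le> t" "t \<le> hi" "hS s t = 0"
    using IVT'[of "hS s" "2 * s - 2" 0 hi, OF h0 _ hi(2) cont] hi(1) by force
  have "t \<noteq> 2 * s - 2" using t(3) s by (auto simp: hS_def)
  then have tp: "t - 2 * s + 2 > 0" using t(1) by simp
  have "t \<noteq> hi" using t(3) hi(1) by auto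
  then have thi: "t < hi" using t(2) by simp
  have b: "bS s t > 0" unfolding bS_def using tp s by simp
  have e2: "s + 2 * (s - 1) * bS s t = t * bS s t"
  proof -
    have "bS s t * (t - 2 * s + 2) = s" unfolding bS_def using tp by simp
    then show ?thesis by (simp add: algebra_simps)
  qed
  have e1: "(s - 1) + s * bS s t = t"
  proof -
    have sq: "s * s = (t - 2 * s + 2) * (t - s + 1)" using t(3) by (simp add: hS_def power2_eq_square)
    have "s * bS s t = s * s / (t - 2 * s + 2)" by (simp add: bS_def)
    also have "\<dots> = t - s + 1" unfolding sq using tp by simp
    finally have "s * bS s t = t - s + 1" .
    then show ?thesis by simp
  qed
  show ?thesis using thi b e1 e2 by blast
qed


lemma num_facts:
  "gH 10 11 < 0" "gH 12 (27/2) < 0" "gH 4 (18/5) \<ge> 0" "gH 6 (63/10) \<ge> 0" "gH 8 (351/40) \<ge> 0"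
  "hS 2 (18/5) > 0" "hS 3 (63/10) > 0" "hS 4 (351/40) > 0"
  by (simp_all add: gH_def aH_def cH_def hS_def power2_eq_square)

lemma F_mono:
  fixes lo i w :: int
  assumes "lo \<le> i" "i \<le> w"
  shows "lo * (2 * w - lo - 1) \<le> i * (2 * w - i - 1)"
proof (cases "lo = i")
  case True then show ?thesis by simp
next
  case False
  then have "0 \<le> i - lo" "0 \<le> 2 * w - 1 - i - lo" using assms by auto
  then have "0 \<le> (i - lo) * (2 * w - 1 - i - lo)" by (rule mult_nonneg_nonneg)
  moreover have "i * (2 * w - i - 1) - lo * (2 * w - lo - 1) = (i - lo) * (2 * w - 1 - i - lo)"
    by (simp add: algebra_simps)
  ultimately show ?thesis by linarith
qed

lemma T14:
  fixes s w :: int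
  assumes "1 \<le> s" "s \<le> w" "14 \<le> s + w"
  shows "3 * (s + w) \<le> max 2 s * (2 * w - max 2 s - 1)"
proof (cases "s \<le> 2")
  case True
  then have "max 2 s = 2" by simp
  then show ?thesis using assms True by simp
next
  case False
  then have m: "max 2 s = s" by simp
  show ?thesis
  proof (cases "s \<ge> 7")
    case True
    have "s * (2 * s - 3) \<le> w * (2 * s - 3)" using assms True by (intro mult_right_mono) auto
    moreover have "0 \<le> s * (s - 7)" using True by simp
    moreover have "s * (2 * w - s - 1) - 3 * (s + w) = w * (2 * s - 3) - s * s - 4 * s" by (simp add: algebra_simps)
    moreover have "s * (2 * s - 3) - s * s - 4 * s = s * (s - 7)" by (simp add: algebra_simps)
    ultimately show ?thesis unfolding m by linarith
  next
    case F2: False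
    then have "s = 3 \<or> s = 4 \<or> s = 5 \<or> s = 6" using False by auto
    then show ?thesis unfolding m using assms by auto
  qed
qed

lemma B_target:
  fixes n s i w Q :: nat
  assumes "1 \<le> s" "s \<le> i" "2 \<le> i" "i \<le> w" "n = s + w" "Q \<ge> i * (w - 1) + (w - i) * i"
  shows "(14 \<le> n \<longrightarrow> 3 * n \<le> Q) \<and> (n = 10 \<longrightarrow> 20 \<le> Q) \<and> (n = 12 \<longrightarrow> 30 \<le> Q)
     \<and> (n = 4 \<longrightarrow> s < w \<longrightarrow> 3 \<le> Q) \<and> (n = 6 \<longrightarrow> s < w \<longrightarrow> 8 \<le> Q) \<and> (n = 8 \<longrightarrow> s < w \<longrightarrow> 15 \<le> Q)"
proof -
  define lo where "lo = max 2 (int s)"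
  have q: "int i * (2 * int w - int i - 1) \<le> int Q"
  proof -
    have a: "int (i * (w - 1)) = int i * (int w - 1)" using assms by (simp add: of_nat_diff)
    have b: "int ((w - i) * i) = (int w - int i) * int i" using assms by (simp add: of_nat_diff)
    have "int (i * (w - 1) + (w - i) * i) = int i * (int w - 1) + (int w - int i) * int i"
      by (simp only: of_nat_add a b)
    also have "\<dots> = int i * (2 * int w - int i - 1)" by (simp add: algebra_simps)
    finally have "int (i * (w - 1) + (w - i) * i) = int i * (2 * int w - int i - 1)" .
    then show ?thesis using assms(6) by linarith
  qed
  have lo: "lo * (2 * int w - lo - 1) \<le> int i * (2 * int w - int i - 1)"
    unfolding lo_def using assms by (intro F_mono) auto
  have sw: "s \<le> w" using assms by simp
  have g14: "14 \<le> n \<longrightarrow> 3 * n \<le> Q"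
  proof
    assume "14 \<le> n"
    then have "3 * (int s + int w) \<le> lo * (2 * int w - lo - 1)" unfolding lo_def using assms sw by (intro T14) auto
    moreover have "int n = int s + int w" using assms(5) by simp
    ultimately have "3 * int n \<le> int Q" using order_trans[OF order_trans[OF _ lo] q] by simp
    then show "3 * n \<le> Q" by linarith
  qed
  have small: "lo * (2 * int w - lo - 1) \<ge> c" if "n = m" "s \<in> A" "\<forall>s\<in>A. max 2 (int s) * (2 * (int m - int s) - max 2 (int s) - 1) \<ge> c" for m A c
  proof -
    have "int w = int m - int s" using that(1) assms(5) by simp
    then show ?thesis unfolding lo_def using that(2,3) by auto
  qed
  have sl: "s \<le> n div 2" using assms by simp
  have g10: "n = 10 \<longrightarrow> 20 \<le> Q"
  proof
    assume n: "n = 10"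
    then have "s \<in> {1,2,3,4,5}" using assms sl by auto
    then have "lo * (2 * int w - lo - 1) \<ge> 20" by (rule small[OF n]) auto
    then show "20 \<le> Q" using q lo by linarith
  qed
  have g12: "n = 12 \<longrightarrow> 30 \<le> Q"
  proof
    assume n: "n = 12"
    then have "s \<in> {1,2,3,4,5,6}" using assms sl by auto
    then have "lo * (2 * int w - lo - 1) \<ge> 30" by (rule small[OF n]) auto
    then show "30 \<le> Q" using q lo by linarith
  qed
  have g4: "n = 4 \<longrightarrow> s < w \<longrightarrow> 3 \<le> Q"
  proof (intro impI)
    assume n: "n = 4" and "s < w"
    then have "s \<in> {1}" using assms by auto
    then have "lo * (2 * int w - lo - 1) \<ge> 3" by (rule small[OF n]) auto
    then show "3 \<le> Q" using q lo by linarith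
  qed
  have g6: "n = 6 \<longrightarrow> s < w \<longrightarrow> 8 \<le> Q"
  proof (intro impI)
    assume n: "n = 6" and "s < w"
    then have "s \<in> {1,2}" using assms by auto
    then have "lo * (2 * int w - lo - 1) \<ge> 8" by (rule small[OF n]) auto
    then show "8 \<le> Q" using q lo by linarith
  qed
  have g8: "n = 8 \<longrightarrow> s < w \<longrightarrow> 15 \<le> Q"
  proof (intro impI)
    assume n: "n = 8" and "s < w"
    then have "s \<in> {1,2,3}" using assms by auto
    then have "lo * (2 * int w - lo - 1) \<ge> 15" by (rule small[OF n]) auto
    then show "15 \<le> Q" using q lo by linarith
  qed
  show ?thesis using g14 g10 g12 g4 g6 g8 by blast
qed

context gs begin

lemma ones_bound:
  assumes conn: "connected_graph V E"
  shows "real (card V * (card V - 1) + card Qs) \<le> lambda1_dist V E * real (card V)"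
proof -
  have ne: "V \<noteq> {}" using conn by (simp add: connected_graph_def)
  have nv: "nsq V (\<lambda>_. 1) = real (card V)" by (simp add: nsq_def)
  have "card V > 0" using ne finV by (simp add: card_gt_0_iff)
  then have np: "nsq V (\<lambda>_. 1) > 0" using nv by simp
  have "qf (DM E) V (\<lambda>_. 1) \<le> lambda1_dist V E * nsq V (\<lambda>_. 1)"
    by (rule lam_rayleigh[OF finV sg_sym[OF sg] np])
  then show ?thesis using qf_ones[OF conn] nv by simp
qed

lemma WS: "card W + card S = card V"
proof -
  have "card S \<le> card V" using finV sub by (rule card_mono)
  then show ?thesis using cardW by simp
qed

lemma only_S:
  assumes w: "w0 \<in> I" and e: "E w0 x"
  shows "x \<in> S"
proof (rule ccontr)
  assume "x \<notin> S"
  then have "x \<in> W" using sg_in[OF sg e] by (simp add: W_def)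
  moreover have "w0 \<in> W" using w I_sub by blast
  ultimately have "E' w0 x" using E_E'[OF e] by blast
  then show False using w \<open>x \<in> W\<close> by (simp add: I_def)
qed

lemma pendant_extract:
  assumes conn: "connected_graph V E" and i1: "card I = 1" and s1: "card S = 1"
  shows "\<exists>v w0. v \<in> V \<and> w0 \<in> V \<and> v \<noteq> w0 \<and> (\<forall>x. E w0 x \<longrightarrow> x = v) \<and> E w0 v"
proof -
  obtain w0 where I1: "I = {w0}" using i1 card_1_singletonE by blast
  obtain v where S1: "S = {v}" using s1 card_1_singletonE by blast
  have w0W: "w0 \<in> W" using I1 I_sub by blast
  then have "w0 \<in> V - S" unfolding W_def .
  then have w0V: "w0 \<in> V" "w0 \<noteq> v" using S1 by auto
  have vV: "v \<in> V" using S1 sub by blast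
  have only: "\<forall>x. E w0 x \<longrightarrow> x = v" using only_S[of w0] I1 S1 by blast
  obtain y where "y \<in> V" "E w0 y" using conn_nbr[OF sg conn w0V(1) vV] w0V(2) by blast
  then have "E w0 v" using only by blast
  then show ?thesis using only vV w0V by blast
qed

end

lemma part1:
  fixes V :: "'a set" and E :: "'a \<Rightarrow> 'a \<Rightarrow> bool" and k n :: nat
  assumes sg: "simple_graph V E" and conn: "connected_graph V E"
    and k: "odd k" "k \<ge> 3" and cV: "card V = n" and ev: "even n" and n10: "n \<ge> 10"
    and lam: "lambda1_dist V E \<le> lambda1_dist {0..<n} (K1_join_Kn2_K1 n)"
    and ni: "\<not> graph_iso V E {0..<n} (K1_join_Kn2_K1 n)"
  shows "GBC k V E"
proof (rule ccontr)
  assume ng: "\<not> GBC k V E"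
  have c2: "card V \<ge> 2" using cV n10 by simp
  obtain S where S: "S \<noteq> {}" "S \<subseteq> V" "0 \<le> bt_value k V E S"
    using not_GBC[OF sg conn _ c2 ng] cV ev by blast
  interpret gs V E S by unfold_locales (rule sg, rule S(2))
  define hi :: real where "hi = (if n = 10 then 11 else if n = 12 then 27/2 else real n + 2)"
  have ghi: "gH (real n) hi < 0"
    using num_facts(1,2) gH_hi[of "real n"] n10 by (auto simp: hi_def)
  have hil: "real n - 1 \<le> hi" "hi \<le> real n + 2" using n10 by (auto simp: hi_def)
  obtain t where t: "real n - 1 \<le> t" "t \<le> hi" "aH (real n) t > 0" "cH (real n) t > 0"
    "(real n - 2) + cH (real n) t = t * aH (real n) t" "aH (real n) t + 2 * (real n - 2) = t * cH (real n) t"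
    "aH (real n) t + (real n - 3) + 2 * cH (real n) t = t"
    using H_root[of "real n" "real n - 1" hi] hil n10 gH_lo[of "real n"] ghi by force
  have "gH (real n) t = 0" using t(7) by (simp add: gH_def)
  then have thi: "t < hi" using t(2) ghi by (cases "t = hi") auto
  have lH: "lambda1_dist {0..<n} (K1_join_Kn2_K1 n) \<le> t"
    by (rule H_lam) (use n10 t in auto)
  have lG: "lambda1_dist V E \<le> t" using lam lH by linarith
  have ones: "real (n * (n - 1) + card Qs) \<le> lambda1_dist V E * real n"
    using ones_bound[OF conn] cV by simp
  have np: "real n > 0" using n10 by simp
  have key: "lambda1_dist V E \<ge> c" if "real n * c \<le> real (n * (n - 1) + card Qs)" for c
  proof -
    have "c * real n \<le> lambda1_dist V E * real n" using that ones by (simp add: mult.commute)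
    then show ?thesis using np by (simp add: mult_le_cancel_right)
  qed
  have ws: "card W + card S = n" using WS cV by simp
  consider (A) "card I < card S \<and> card F \<ge> 3 \<and> card W \<ge> card S + 8"
    | (B) "card I \<ge> card S \<and> card I \<ge> 2" | (C) "card I = 1 \<and> card S = 1"
    using cases_main[OF k S(1) S(3)] by blast
  then show False
  proof cases
    case A
    then have q6: "card Qs \<ge> 6 * card W" using Qs_ge6 by blast
    have "n * (n - 1) + 3 * n \<le> n * (n - 1) + card Qs" using q6 A ws by linarith
    moreover have "n * (n - 1) + 3 * n = n * (n + 2)" using n10 by (simp add: algebra_simps)
    ultimately have "real n * (real n + 2) \<le> real (n * (n - 1) + card Qs)"
      by (metis of_nat_add of_nat_le_iff of_nat_mult of_nat_numeral)
    then have "lambda1_dist V E \<ge> real n + 2" by (rule key)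
    then show False using lG thi hil by linarith
  next
    case B
    have s1: "card S \<ge> 1" using S(1) finV S(2) finite_subset by (metis One_nat_def Suc_leI card_gt_0_iff)
    have iw: "card I \<le> card W" using I_sub finW by (rule card_mono[rotated])
    have bt: "(14 \<le> n \<longrightarrow> 3 * n \<le> card Qs) \<and> (n = 10 \<longrightarrow> 20 \<le> card Qs) \<and> (n = 12 \<longrightarrow> 30 \<le> card Qs)"
      using B_target[of "card S" "card I" "card W" n "card Qs"] B s1 iw ws Qs_ge1 by auto
    have "real n * hi \<le> real (n * (n - 1) + card Qs)"
    proof -
      consider "n = 10" | "n = 12" | "n \<ge> 14"
      proof -
        have "n \<noteq> 11" "n \<noteq> 13" using ev by auto
        then show ?thesis using n10 that by linarith
      qed
      then show ?thesis
      proof cases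
        case 1 then show ?thesis using bt by (simp add: hi_def)
      next
        case 2
        then have "30 \<le> card Qs" using bt by simp
        then have "(30::real) \<le> real (card Qs)" by simp
        then show ?thesis using 2 by (simp add: hi_def)
      next
        case 3
        then have q: "3 * n \<le> card Qs" using bt by simp
        have "n * (n - 1) + 3 * n = n * (n + 2)" using n10 by (simp add: algebra_simps)
        then have "n * (n + 2) \<le> n * (n - 1) + card Qs" using q by linarith
        then have "real n * (real n + 2) \<le> real (n * (n - 1) + card Qs)"
          by (metis of_nat_add of_nat_le_iff of_nat_mult of_nat_numeral)
        then show ?thesis using 3 by (simp add: hi_def)
      qed
    qed
    then have "lambda1_dist V E \<ge> hi" by (rule key)
    then show False using lG thi by linarith
  next
    case C
    obtain v w0 where vw: "v \<in> V" "w0 \<in> V" "v \<noteq> w0" and only: "\<forall>x. E w0 x \<longrightarrow> x = v" and Ewv: "E w0 v"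
      using pendant_extract[OF conn] C by blast
    show False
    proof (cases "\<exists>p q. p \<in> V \<and> q \<in> V \<and> p \<noteq> q \<and> p \<noteq> w0 \<and> q \<noteq> w0 \<and> \<not> E p q")
      case True
      then obtain p q where pq: "p \<in> V" "q \<in> V" "p \<noteq> q" "p \<noteq> w0" "q \<noteq> w0" "\<not> E p q" by blast
      have "t < lambda1_dist V E"
        by (rule pendant_lb(2)[OF sg conn cV vw _ t(3,4) t(5,6,7) pq]) (use only in blast)
      then show False using lG by linarith
    next
      case False
      have "graph_iso V E {0..<n} (K1_join_Kn2_K1 n)"
        by (rule pendant_iso[OF sg cV vw Ewv]) (use only False in blast)+
      then show False using ni by blast
    qed
  qed
qed


lemma part2:
  fixes V :: "'a set" and E :: "'a \<Rightarrow> 'a \<Rightarrow> bool" and k n :: nat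
  assumes sg: "simple_graph V E" and conn: "connected_graph V E"
    and k: "odd k" "k \<ge> 3" and cV: "card V = n" and ev: "even n" and n4: "n \<ge> 4" and n8: "n \<le> 8"
    and lam: "lambda1_dist V E \<le> lambda1_dist {0..<n} (S_graph n (n div 2))"
    and ni: "\<not> graph_iso V E {0..<n} (S_graph n (n div 2))"
  shows "GBC k V E"
proof (rule ccontr)
  assume ng: "\<not> GBC k V E"
  have c2: "card V \<ge> 2" using cV n4 by simp
  obtain S where S: "S \<noteq> {}" "S \<subseteq> V" "0 \<le> bt_value k V E S"
    using not_GBC[OF sg conn _ c2 ng] cV ev by blast
  interpret gs V E S by unfold_locales (rule sg, rule S(2))
  have n3: "n = 4 \<or> n = 6 \<or> n = 8" using n4 n8 ev by presburger
  define s0 where "s0 = n div 2"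
  have ns0: "n = 2 * s0" using ev by (simp add: s0_def)
  have s01: "s0 \<ge> 1" using n4 ns0 by simp
  define hi :: real where "hi = (if n = 4 then 18/5 else if n = 6 then 63/10 else 351/40)"
  have hS: "hS (real s0) hi > 0" using n3 num_facts(6,7,8) by (auto simp: hi_def s0_def)
  have hge: "2 * real s0 - 2 \<le> hi" using n3 by (auto simp: hi_def s0_def)
  obtain t' where t': "t' < hi" "bS (real s0) t' > 0"
      "(real s0 - 1) + real s0 * bS (real s0) t' = t'"
      "real s0 + 2 * (real s0 - 1) * bS (real s0) t' = t' * bS (real s0) t'"
    using S_root[OF _ hS hge] s01 by auto
  have lS: "lambda1_dist {0..<n} (S_graph n s0) \<le> t'"
    by (rule SG_lam[OF s01 ns0 t'(2) t'(3,4)])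
  have lG: "lambda1_dist V E \<le> t'" using lam lS by (simp add: s0_def)
  have ones: "real (n * (n - 1) + card Qs) \<le> lambda1_dist V E * real n"
    using ones_bound[OF conn] cV by simp
  have np: "real n > 0" using n4 by simp
  have key: "lambda1_dist V E \<ge> c" if "real n * c \<le> real (n * (n - 1) + card Qs)" for c
  proof -
    have "c * real n \<le> lambda1_dist V E * real n" using that ones by (simp add: mult.commute)
    then show ?thesis using np by (simp add: mult_le_cancel_right)
  qed
  have ws: "card W + card S = n" using WS cV by simp
  consider (A) "card I < card S \<and> card F \<ge> 3 \<and> card W \<ge> card S + 8"
    | (B) "card I \<ge> card S \<and> card I \<ge> 2" | (C) "card I = 1 \<and> card S = 1"
    using cases_main[OF k S(1) S(3)] by blast
  then show False
  proof cases
    case A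
    then show False using ws n8 by linarith
  next
    case B
    have s1: "card S \<ge> 1" using S(1) finV S(2) finite_subset by (metis One_nat_def Suc_leI card_gt_0_iff)
    have iw: "card I \<le> card W" using I_sub finW by (rule card_mono[rotated])
    show False
    proof (cases "card S = s0")
      case sS: True
      have cw: "card W = s0" using ws sS ns0 by simp
      have IW: "I = W" using I_sub finW iw B sS cw by (metis card_subset_eq le_antisym)
      have cW: "card (V - S) = s0" using cw by (simp add: W_def)
      have only: "\<And>w x. w \<in> V - S \<Longrightarrow> E w x \<Longrightarrow> x \<in> S"
        using only_S IW by (auto simp: W_def)
      show False
      proof (cases "\<exists>p q. p \<in> V \<and> q \<in> V \<and> p \<noteq> q \<and> (p \<in> S \<or> q \<in> S) \<and> \<not> E p q")
        case True
        then obtain p q where pq: "p \<in> V" "q \<in> V" "p \<noteq> q" "p \<in> S \<or> q \<in> S" "\<not> E p q" by blast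
        have "t' < lambda1_dist V E"
          by (rule s_lb(2)[OF sg conn S(2) _ cW only t'(2) t'(3,4) pq]) (use sS in simp)
        then show False using lG by linarith
      next
        case False
        have "graph_iso V E {0..<n} (S_graph n s0)"
          by (rule S_iso[OF sg cV ns0 S(2)]) (use \<open>card S = s0\<close> only False in blast)+
        then show False using ni by (simp add: s0_def)
      qed
    next
      case False
      then have sw: "card S < card W" using B iw ws ns0 by linarith
      have bt: "(n = 4 \<longrightarrow> card S < card W \<longrightarrow> 3 \<le> card Qs) \<and> (n = 6 \<longrightarrow> card S < card W \<longrightarrow> 8 \<le> card Qs)
          \<and> (n = 8 \<longrightarrow> card S < card W \<longrightarrow> 15 \<le> card Qs)"
        using B_target[of "card S" "card I" "card W" n "card Qs"] B s1 iw ws Qs_ge1 by auto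
      have "real n * hi \<le> real (n * (n - 1) + card Qs)"
      proof -
        consider "n = 4" | "n = 6" | "n = 8" using n3 by blast
        then show ?thesis
        proof cases
          case 1
          then have "(3::real) \<le> real (card Qs)" using bt sw by simp
          then show ?thesis using 1 by (simp add: hi_def)
        next
          case 2
          then have "(8::real) \<le> real (card Qs)" using bt sw by simp
          then show ?thesis using 2 by (simp add: hi_def)
        next
          case 3
          then have "(15::real) \<le> real (card Qs)" using bt sw by simp
          then show ?thesis using 3 by (simp add: hi_def)
        qed
      qed
      then have "lambda1_dist V E \<ge> hi" by (rule key)
      then show False using lG t'(1) by linarith
    qed
  next
    case C
    obtain v w0 where vw: "v \<in> V" "w0 \<in> V" "v \<noteq> w0" and only: "\<forall>x. E w0 x \<longrightarrow> x = v" and Ewv: "E w0 v"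
      using pendant_extract[OF conn] C by blast
    have glo: "gH (real n) hi \<ge> 0" using n3 num_facts(3,4,5) by (auto simp: hi_def)
    have hil: "1 < hi" "hi \<le> real n + 2" using n3 by (auto simp: hi_def)
    obtain t where t: "hi \<le> t" "t \<le> real n + 2" "aH (real n) t > 0" "cH (real n) t > 0"
      "(real n - 2) + cH (real n) t = t * aH (real n) t" "aH (real n) t + 2 * (real n - 2) = t * cH (real n) t"
      "aH (real n) t + (real n - 3) + 2 * cH (real n) t = t"
      using H_root[of "real n" hi "real n + 2"] hil n4 glo gH_hi[of "real n"] by force
    have "t \<le> lambda1_dist V E"
      by (rule pendant_lb(1)[OF sg conn cV vw _ t(3,4) t(5,6,7)]) (use only in blast)
    then show False using lG t(1) t'(1) by linarith
  qed
qed

theorem theorem4: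
  fixes V :: "'a set" and E :: "'a \<Rightarrow> 'a \<Rightarrow> bool" and k n :: nat
  assumes "simple_graph V E" and "connected_graph V E"
    and "odd k" and "k \<ge> 3"
    and "card V = n" and "even n" and "n \<ge> 4"
  shows "(n \<ge> 10 \<and> lambda1_dist V E \<le> lambda1_dist {0..<n} (K1_join_Kn2_K1 n)
            \<longrightarrow> \<not> graph_iso V E {0..<n} (K1_join_Kn2_K1 n) \<longrightarrow> GBC k V E)
       \<and> (n \<le> 8 \<and> lambda1_dist V E \<le> lambda1_dist {0..<n} (S_graph n (n div 2))
            \<longrightarrow> \<not> graph_iso V E {0..<n} (S_graph n (n div 2)) \<longrightarrow> GBC k V E)"
  using part1[OF assms(1-6)] part2[OF assms(1-7)] by blast

end
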